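(* There exists a function $f\colon\mathbb{N}\to\mathbb{N}$ such that for every positive integer $n$ and each of the four constructions $Q\in\{Q(\mathscr{M}^{KI}),Q(\mathscr{M}^{KK}),Q(\mathscr{A}^{KK}),Q(\mathscr{H}^{KK})\}$, we have $\mathsf{rw}(Q_{f(n)}(\cdot_{f(n)}))\ge n$, i.e. $\mathsf{rw}(Q_{f(n)}(\mathscr{M}^{KI}_{f(n)}))$, $\mathsf{rw}(Q_{f(n)}(\mathscr{M}^{KK}_{f(n)}))$, $\mathsf{rw}(Q_{f(n)}(\mathscr{A}^{KK}_{f(n)}))$ and $\mathsf{rw}(Q_{f(n)}(\mathscr{H}^{KK}_{f(n)}))$ are all at least $n$.
   Context: Let $X^1,\dots,X^k$ be pairwise disjoint ordered sets $X^j=\{x^j_1,\dots,x^j_m\}$, and let $y^1,\dots,y^k,z^1,\dots,z^{k-1}$ be further distinct vertices. For ordered sets $X,Y$ of size $m$: $\mathcal{M}(X,Y)$ has edges $x_iy_i$, $\mathcal{A}(X,Y)$ has edges $x_iy_j$ ($i\ne j$), $\mathcal{H}(X,Y)$ has edges $x_iy_j$ ($i\le j$); $K(S)$ is the clique on $S$, $K(S,T)$ the complete bipartite graph between $S,T$; unions take unions of vertex and edge sets. Define $Q_k(\mathscr{M}^{KK}_m)=\bigcup_{i\in[k-1]}\mathcal{M}(X^i,X^{i+1})\cup\bigcup_{i\in[k]}K(\{y^i\}\cup X^i)$; $Q_k(\mathscr{M}^{KI}_m)=\bigcup_{i\in[k-1]}\mathcal{M}(X^i,X^{i+1})\cup\bigcup_{i\in[\lceil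 k/2\rceil]}K(\{y^{2i-1}\}\cup X^{2i-1})$; $Q_k(\mathscr{H}^{KK}_m)=\bigcup_{i\in[k-1]}\mathcal{H}(X^i,X^{i+1})\cup\bigcup_{i\in[k]}K(\{y^i\}\cup X^i)$; $Q_k(\mathscr{A}^{KK}_m)=\bigcup_{i\in[k-1]}\mathcal{A}(X^i,X^{i+1})\cup\bigcup_{i\in[k]}K(\{y^i\}\cup X^i)\cup\bigcup_{i\in[k-1]}K(\{z^i\},X^i\cup X^{i+1})$. Rankwidth $\mathsf{rw}(G)$: the cutrank of $X\subseteq V(G)$ is the $\mathbb{F}_2$-rank of the adjacency submatrix with rows $X$ and columns $V(G)\setminus X$; a rank-decomposition is a tree with internal nodes of degree $3$ and a bijection from its leaves to $V(G)$; its width is the maximum over tree edges of the cutrank of the vertices mapped to one side; $\mathsf{rw}(G)$ is the minimum width. *)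

theory Defs
  imports Main
begin

text \<open>A graph is a pair (vertex set, edge set), edges being 2-element sets.\<close>
type_synonym 'v graph = "'v set \<times> 'v set set"

definition gunion :: "'v graph \<Rightarrow> 'v graph \<Rightarrow> 'v graph" where
  "gunion G H = (fst G \<union> fst H, snd G \<union> snd H)"

definition gUnion :: "'i set \<Rightarrow> ('i \<Rightarrow> 'v graph) \<Rightarrow> 'v graph" where
  "gUnion I G = ((\<Union>i\<in>I. fst (G i)), (\<Union>i\<in>I. snd (G i)))"

definition clique :: "'v set \<Rightarrow> 'v graph" where
  "clique S = (S, {e. \<exists>a b. a \<in> S \<and> b \<in> S \<and> a \<noteq> b \<and> e = {a, b}})"

definition cbip :: "'v set \<Rightarrow> 'v set \<Rightarrow> 'v graph" where
  "cbip S T = (S \<union> T, {e. \<exists>a b. a \<in> S \<and> b \<in> T \<and> a \<noteq> b \<and> e = {a, b}})"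

text \<open>Cutrank: the GF(2)-rank of the adjacency submatrix with rows A and columns V - A,
  i.e. the maximum size of a set of rows that is linearly independent over GF(2)
  (no nonempty subset of the rows sums to the zero vector).\<close>
definition cutrank :: "'v graph \<Rightarrow> 'v set \<Rightarrow> nat" where
  "cutrank G A = Max {card S | S. S \<subseteq> A \<and>
     (\<forall>T. T \<subseteq> S \<and> T \<noteq> {} \<longrightarrow>
        (\<exists>c \<in> fst G - A. odd (card {t \<in> T. {t, c} \<in> snd G})))}"

definition tadj :: "nat set set \<Rightarrow> (nat \<times> nat) set" where
  "tadj TE = {(u, v). {u, v} \<in> TE}"

definition is_tree :: "nat set \<Rightarrow> nat set set \<Rightarrow> bool" where
  "is_tree N TE \<longleftrightarrow> finite N \<and> N \<noteq> {} \<and>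
     (\<forall>e \<in> TE. \<exists>u v. u \<in> N \<and> v \<in> N \<and> u \<noteq> v \<and> e = {u, v}) \<and>
     (\<forall>u \<in> N. \<forall>v \<in> N. (u, v) \<in> (tadj TE)\<^sup>*) \<and>
     card TE = card N - 1"

definition tdeg :: "nat set set \<Rightarrow> nat \<Rightarrow> nat" where
  "tdeg TE u = card {e \<in> TE. u \<in> e}"

definition tleaves :: "nat set \<Rightarrow> nat set set \<Rightarrow> nat set" where
  "tleaves N TE = {u \<in> N. tdeg TE u \<le> 1}"

definition is_rank_decomp :: "'v graph \<Rightarrow> nat set \<Rightarrow> nat set set \<Rightarrow> (nat \<Rightarrow> 'v) \<Rightarrow> bool" where
  "is_rank_decomp G N TE lam \<longleftrightarrow> is_tree N TE \<and>
     (\<forall>u \<in> N. tdeg TE u \<le> 1 \<or> tdeg TE u = 3) \<and>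
     bij_betw lam (tleaves N TE) (fst G)"

definition tside :: "nat set set \<Rightarrow> nat set \<Rightarrow> nat \<Rightarrow> nat set" where
  "tside TE e u = {w. (u, w) \<in> (tadj (TE - {e}))\<^sup>*}"

definition decomp_width :: "'v graph \<Rightarrow> nat set \<Rightarrow> nat set set \<Rightarrow> (nat \<Rightarrow> 'v) \<Rightarrow> nat" where
  "decomp_width G N TE lam = Max ({0} \<union>
     {cutrank G (lam ` (tleaves N TE \<inter> tside TE {u, v} u)) | u v. {u, v} \<in> TE})"

definition rankwidth :: "'v graph \<Rightarrow> nat" where
  "rankwidth G = (LEAST w. \<exists>N TE lam. is_rank_decomp G N TE lam \<and> decomp_width G N TE lam \<le> w)"

datatype qv = Xv nat nat | Yv nat | Zv nat

definition Xs :: "nat \<Rightarrow> nat \<Rightarrow> qv set" where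
  "Xs m j = (\<lambda>a. Xv j a) ` {1..m}"

definition Mg :: "nat \<Rightarrow> nat \<Rightarrow> nat \<Rightarrow> qv graph" where
  "Mg m i j = (Xs m i \<union> Xs m j, {e. \<exists>a \<in> {1..m}. e = {Xv i a, Xv j a}})"

definition Ag :: "nat \<Rightarrow> nat \<Rightarrow> nat \<Rightarrow> qv graph" where
  "Ag m i j = (Xs m i \<union> Xs m j, {e. \<exists>a \<in> {1..m}. \<exists>b \<in> {1..m}. a \<noteq> b \<and> e = {Xv i a, Xv j b}})"

definition Hg :: "nat \<Rightarrow> nat \<Rightarrow> nat \<Rightarrow> qv graph" where
  "Hg m i j = (Xs m i \<union> Xs m j, {e. \<exists>a \<in> {1..m}. \<exists>b \<in> {1..m}. a \<le> b \<and> e = {Xv i a, Xv j b}})"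

definition Q_MKK :: "nat \<Rightarrow> nat \<Rightarrow> qv graph" where
  "Q_MKK k m = gunion (gUnion {1..k-1} (\<lambda>i. Mg m i (i+1)))
                      (gUnion {1..k} (\<lambda>i. clique ({Yv i} \<union> Xs m i)))"

definition Q_MKI :: "nat \<Rightarrow> nat \<Rightarrow> qv graph" where
  "Q_MKI k m = gunion (gUnion {1..k-1} (\<lambda>i. Mg m i (i+1)))
                      (gUnion {1..(k+1) div 2} (\<lambda>i. clique ({Yv (2*i-1)} \<union> Xs m (2*i-1))))"

definition Q_HKK :: "nat \<Rightarrow> nat \<Rightarrow> qv graph" where
  "Q_HKK k m = gunion (gUnion {1..k-1} (\<lambda>i. Hg m i (i+1)))
                      (gUnion {1..k} (\<lambda>i. clique ({Yv i} \<union> Xs m i)))"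

definition Q_AKK :: "nat \<Rightarrow> nat \<Rightarrow> qv graph" where
  "Q_AKK k m = gunion (gunion (gUnion {1..k-1} (\<lambda>i. Ag m i (i+1)))
                              (gUnion {1..k} (\<lambda>i. clique ({Yv i} \<union> Xs m i))))
                      (gUnion {1..k-1} (\<lambda>i. cbip {Zv i} (Xs m i \<union> Xs m (i+1))))"

end

theory Submission
  imports Defs
begin


lemma tadj_conv: "(tadj E)\<inverse> = tadj E"
  unfolding tadj_def by (auto simp: insert_commute)

lemma rt_sym: "(x,y) \<in> (tadj E)\<^sup>* \<Longrightarrow> (y,x) \<in> (tadj E)\<^sup>*"
  by (metis rtrancl_converseI tadj_conv)

lemma tadj_mono: "E \<subseteq> F \<Longrightarrow> (x,y) \<in> (tadj E)\<^sup>* \<Longrightarrow> (x,y) \<in> (tadj F)\<^sup>*"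
proof -
  assume "E \<subseteq> F" "(x,y) \<in> (tadj E)\<^sup>*"
  moreover have "tadj E \<subseteq> tadj F" using \<open>E \<subseteq> F\<close> unfolding tadj_def by auto
  ultimately show ?thesis using rtrancl_mono by blast
qed

lemma tw:
  assumes "(r,x) \<in> (tadj (insert {a,b} E))\<^sup>*"
  shows "(r,x) \<in> (tadj E)\<^sup>* \<or> ((r,a) \<in> (tadj E)\<^sup>* \<and> (b,x) \<in> (tadj E)\<^sup>*)
     \<or> ((r,b) \<in> (tadj E)\<^sup>* \<and> (a,x) \<in> (tadj E)\<^sup>*)"
  using assms
proof (induction rule: rtrancl_induct)
  case base
  then show ?case by simp
next
  case (step y z)
  from step.hyps(2) have "{y,z} = {a,b} \<or> (y,z) \<in> tadj E" unfolding tadj_def by auto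
  then show ?case
  proof
    assume "{y,z} = {a,b}"
    then have "(y = a \<and> z = b) \<or> (y = b \<and> z = a)" by (auto simp: doubleton_eq_iff)
    then show ?thesis using step.IH by auto
  next
    assume yz: "(y,z) \<in> tadj E"
    show ?thesis using step.IH
      by (meson rtrancl.rtrancl_into_rtrancl yz)
  qed
qed

lemma cover:
  assumes "finite E" "finite R" "\<forall>x\<in>N. \<exists>r\<in>R. (r,x) \<in> (tadj E)\<^sup>*"
  shows "card N \<le> card E + card R"
  using assms
proof (induction E arbitrary: R rule: finite_induct)
  case empty
  have "tadj {} = {}" unfolding tadj_def by auto
  then have "N \<subseteq> R" using empty by auto
  then show ?case using card_mono empty by auto
next
  case (insert e F)
  show ?case
  proof (cases "\<exists>a b. e = {a,b}")
    case False
    then have "tadj (insert e F) = tadj F" unfolding tadj_def by auto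
    then have "card N \<le> card F + card R" using insert by auto
    then show ?thesis using insert by simp
  next
    case True
    then obtain a b where e: "e = {a,b}" by blast
    show ?thesis
    proof (cases "\<exists>r\<in>insert b R. (r,a) \<in> (tadj F)\<^sup>*")
      case True
      have "\<forall>x\<in>N. \<exists>r\<in>insert b R. (r,x) \<in> (tadj F)\<^sup>*"
      proof
        fix x assume "x \<in> N"
        then obtain r where r: "r \<in> R" "(r,x) \<in> (tadj (insert {a,b} F))\<^sup>*" using insert.prems e by blast
        from tw[OF r(2)] True r(1) show "\<exists>r\<in>insert b R. (r,x) \<in> (tadj F)\<^sup>*"
          by (meson insertI1 insertI2 rtrancl_trans)
      qed
      then have "card N \<le> card F + card (insert b R)" using insert by auto
      moreover have "card (insert b R) \<le> Suc (card R)" by (simp add: card_insert_le_m1)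
      ultimately show ?thesis using insert by simp
    next
      case False
      have "\<forall>x\<in>N. \<exists>r\<in>insert a R. (r,x) \<in> (tadj F)\<^sup>*"
      proof
        fix x assume "x \<in> N"
        then obtain r where r: "r \<in> R" "(r,x) \<in> (tadj (insert {a,b} F))\<^sup>*" using insert.prems e by blast
        from tw[OF r(2)] False r(1) show "\<exists>r\<in>insert a R. (r,x) \<in> (tadj F)\<^sup>*"
          by blast
      qed
      then have "card N \<le> card F + card (insert a R)" using insert by auto
      moreover have "card (insert a R) \<le> Suc (card R)" by (simp add: card_insert_le_m1)
      ultimately show ?thesis using insert by simp
    qed
  qed
qed


lemma tree_edge: "is_tree N TE \<Longrightarrow> e \<in> TE \<Longrightarrow> \<exists>u v. u\<in>N \<and> v\<in>N \<and> u\<noteq>v \<and> e={u,v}"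
  unfolding is_tree_def by blast

lemma tree_fin: "is_tree N TE \<Longrightarrow> finite TE"
proof -
  assume t: "is_tree N TE"
  then have "TE \<subseteq> Pow N" using tree_edge by fastforce
  moreover have "finite N" using t unfolding is_tree_def by auto
  ultimately show ?thesis by (meson finite_Pow_iff finite_subset)
qed

lemma tree_conn: "is_tree N TE \<Longrightarrow> u \<in> N \<Longrightarrow> v \<in> N \<Longrightarrow> (u,v) \<in> (tadj TE)\<^sup>*"
  unfolding is_tree_def by blast

lemma tadj_in: "(y,z) \<in> tadj E \<longleftrightarrow> {y,z} \<in> E"
  unfolding tadj_def by auto

lemma acyc:
  assumes t: "is_tree N TE" and e: "{u,w} \<in> TE"
  shows "(w,u) \<notin> (tadj (TE - {{u,w}}))\<^sup>*"
proof
  assume wu: "(w,u) \<in> (tadj (TE - {{u,w}}))\<^sup>*"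
  let ?E = "TE - {{u,w}}"
  have TEe: "TE = insert {u,w} ?E" using e by auto
  obtain p q where pq: "p \<in> N" "q \<in> N" "p \<noteq> q" "{u,w} = {p,q}" using tree_edge[OF t e] by blast
  then have wN: "w \<in> N" by (auto simp: doubleton_eq_iff)
  have cov: "\<forall>x\<in>N. \<exists>r\<in>{w}. (r,x) \<in> (tadj ?E)\<^sup>*"
  proof
    fix x assume "x \<in> N"
    then have "(w,x) \<in> (tadj (insert {u,w} ?E))\<^sup>*" using tree_conn[OF t wN] TEe by simp
    from tw[OF this] wu show "\<exists>r\<in>{w}. (r,x) \<in> (tadj ?E)\<^sup>*"
      by (meson rtrancl_trans singletonI)
  qed
  have fE: "finite ?E" using tree_fin[OF t] by auto
  have "card N \<le> card ?E + card {w}" by (rule cover[OF fE _ cov]) simp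
  moreover have "card ?E = card TE - 1" using e tree_fin[OF t] by simp
  moreover have "card TE = card N - 1" "card N \<ge> 1" using t wN unfolding is_tree_def
    by (auto simp: Suc_le_eq card_gt_0_iff)
  moreover have "card TE \<ge> 1" using e tree_fin[OF t] by (metis One_nat_def Suc_leI card_gt_0_iff empty_iff)
  ultimately show False by simp
qed

lemma side_sub:
  assumes t: "is_tree N TE" and u: "u \<in> N"
  shows "tside TE e u \<subseteq> N"
proof
  fix x assume "x \<in> tside TE e u"
  then have "(u,x) \<in> (tadj (TE - {e}))\<^sup>*" unfolding tside_def by auto
  then show "x \<in> N"
  proof (induction rule: rtrancl_induct)
    case base then show ?case using u .
  next
    case (step y z)
    then have "{y,z} \<in> TE" by (simp add: tadj_in)
    then obtain p q where "p \<in> N" "q \<in> N" "{y,z} = {p,q}" using tree_edge[OF t] by blast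
    moreover have "z \<in> {y,z}" by simp
    ultimately show ?case by auto
  qed
qed

lemma side_self: "u \<in> tside TE e u" unfolding tside_def by auto

lemma tdeg_fin: "is_tree N TE \<Longrightarrow> finite {e\<in>TE. u\<in>e}"
  using tree_fin by auto

lemma side_leaf:
  assumes t: "is_tree N TE" and e: "{u,v} \<in> TE" and d: "tdeg TE u \<le> 1"
  shows "tside TE {u,v} u = {u}"
proof -
  have S: "{e\<in>TE. u\<in>e} = {{u,v}}"
  proof -
    have fin: "finite {e\<in>TE. u\<in>e}" using tdeg_fin[OF t] .
    have c: "card {e\<in>TE. u\<in>e} \<le> Suc 0" using d unfolding tdeg_def by simp
    have uv: "{u,v} \<in> {e\<in>TE. u\<in>e}" using e by auto
    have all: "\<forall>a\<in>{e\<in>TE. u\<in>e}. \<forall>b\<in>{e\<in>TE. u\<in>e}. a = b"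
      using card_le_Suc0_iff_eq[OF fin] c by (rule iffD1)
    show ?thesis
    proof (rule set_eqI, rule iffI)
      fix x assume "x \<in> {e\<in>TE. u\<in>e}"
      then have "x = {u,v}" using all uv by (rule_tac bspec[OF bspec[OF all]])
      then show "x \<in> {{u,v}}" by simp
    next
      fix x assume "x \<in> {{u,v}}"
      then show "x \<in> {e\<in>TE. u\<in>e}" using uv by simp
    qed
  qed
  have "x = u" if "(u,x) \<in> (tadj (TE - {{u,v}}))\<^sup>*" for x
    using that
  proof (induction rule: rtrancl_induct)
    case base then show ?case by simp
  next
    case (step y z)
    then have "{y,z} \<in> TE" "{y,z} \<noteq> {u,v}" by (auto simp: tadj_in)
    moreover have "u \<in> {y,z}" using step by simp
    ultimately have "{y,z} \<in> {e\<in>TE. u\<in>e}" "{y,z} \<noteq> {u,v}" by auto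
    then show ?case unfolding S by simp
  qed
  then show ?thesis unfolding tside_def by auto
qed

lemma deg3:
  assumes t: "is_tree N TE" and e: "{u,v} \<in> TE" and d: "tdeg TE u = 3"
  shows "\<exists>w1 w2. {u,w1}\<in>TE \<and> {u,w2}\<in>TE \<and> w1\<noteq>w2 \<and> w1\<noteq>v \<and> w2\<noteq>v \<and> w1\<noteq>u \<and> w2\<noteq>u
     \<and> (\<forall>e\<in>TE. u\<in>e \<longrightarrow> e = {u,v} \<or> e={u,w1} \<or> e={u,w2})"
proof -
  let ?S = "{e\<in>TE. u\<in>e}"
  have c: "card ?S = 3" using d unfolding tdeg_def .
  have f: "finite ?S" using tdeg_fin[OF t] .
  have "{u,v} \<in> ?S" using e by auto
  then have "card (?S - {{u,v}}) = 2" using c f by simp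
  then obtain e2 e3 where e23: "?S - {{u,v}} = {e2,e3}" "e2 \<noteq> e3" by (meson card_2_iff)
  have "e2 \<in> TE" "u \<in> e2" "e2 \<noteq> {u,v}" using e23 by blast+
  then obtain w1 where w1: "e2 = {u,w1}" "w1 \<noteq> u"
  proof -
    obtain p q where "e2 = {p,q}" "p \<noteq> q" using tree_edge[OF t \<open>e2 \<in> TE\<close>] by blast
    then show ?thesis using that \<open>u \<in> e2\<close> by (metis doubleton_eq_iff insert_iff singletonD)
  qed
  have "e3 \<in> TE" "u \<in> e3" "e3 \<noteq> {u,v}" using e23 by blast+
  then obtain w2 where w2: "e3 = {u,w2}" "w2 \<noteq> u"
  proof -
    obtain p q where "e3 = {p,q}" "p \<noteq> q" using tree_edge[OF t \<open>e3 \<in> TE\<close>] by blast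
    then show ?thesis using that \<open>u \<in> e3\<close> by (metis doubleton_eq_iff insert_iff singletonD)
  qed
  show ?thesis
  proof (intro exI conjI)
    show "{u,w1} \<in> TE" "{u,w2} \<in> TE" using e23 w1 w2 by blast+
    show "w1 \<noteq> w2" using e23 w1 w2 by auto
    show "w1 \<noteq> v" using e23 w1 by blast
    show "w2 \<noteq> v" using e23 w2 by blast
    show "w1 \<noteq> u" "w2 \<noteq> u" using w1 w2 by auto
    show "\<forall>e\<in>TE. u \<in> e \<longrightarrow> e = {u, v} \<or> e = {u, w1} \<or> e = {u, w2}"
      using e23 w1 w2 by blast
  qed
qed


lemma side_split:
  assumes t: "is_tree N TE" and e: "{u,v} \<in> TE"
    and w1: "w1 \<noteq> u" and w2: "w2 \<noteq> u"
    and all: "\<forall>e\<in>TE. u\<in>e \<longrightarrow> e = {u,v} \<or> e={u,w1} \<or> e={u,w2}"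
  shows "tside TE {u,v} u \<subseteq> {u} \<union> tside TE {u,w1} w1 \<union> tside TE {u,w2} w2"
proof
  fix x assume "x \<in> tside TE {u,v} u"
  then have "(u,x) \<in> (tadj (TE - {{u,v}}))\<^sup>*" unfolding tside_def by simp
  then show "x \<in> {u} \<union> tside TE {u,w1} w1 \<union> tside TE {u,w2} w2"
  proof (induction rule: rtrancl_induct)
    case base then show ?case by simp
  next
    case (step y z)
    have yz: "{y,z} \<in> TE" "{y,z} \<noteq> {u,v}" using step.hyps(2) by (auto simp: tadj_in)
    consider "y = u" | "y \<in> tside TE {u,w1} w1" | "y \<in> tside TE {u,w2} w2" using step.IH by blast
    then show ?case
    proof cases
      case 1
      then have "u \<in> {y,z}" by simp
      moreover have "u \<in> {y,z} \<longrightarrow> {y,z} = {u,v} \<or> {y,z}={u,w1} \<or> {y,z}={u,w2}"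
        using all yz(1) by (rule bspec)
      ultimately have "{y,z} = {u,w1} \<or> {y,z} = {u,w2}" using yz(2) by simp
      then have "{u,z} = {u,w1} \<or> {u,z} = {u,w2}" using 1 by simp
      then have "z = w1 \<or> z = w2" using w1 w2 by (auto simp: doubleton_eq_iff)
      then show ?thesis using side_self[of w1] side_self[of w2] by auto
    next
      case 2
      show ?thesis
      proof (cases "{y,z} = {u,w1}")
        case True
        then have "z = u \<or> z = w1" by (auto simp: doubleton_eq_iff)
        then show ?thesis using side_self[of w1] by auto
      next
        case False
        then have "(y,z) \<in> tadj (TE - {{u,w1}})" using yz by (simp add: tadj_in)
        then have "z \<in> tside TE {u,w1} w1" using 2 unfolding tside_def
          by (simp add: rtrancl.rtrancl_into_rtrancl)
        then show ?thesis by blast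
      qed
    next
      case 3
      show ?thesis
      proof (cases "{y,z} = {u,w2}")
        case True
        then have "z = u \<or> z = w2" by (auto simp: doubleton_eq_iff)
        then show ?thesis using side_self[of w2] by auto
      next
        case False
        then have "(y,z) \<in> tadj (TE - {{u,w2}})" using yz by (simp add: tadj_in)
        then have "z \<in> tside TE {u,w2} w2" using 3 unfolding tside_def
          by (simp add: rtrancl.rtrancl_into_rtrancl)
        then show ?thesis by blast
      qed
    qed
  qed
qed

lemma side_not: "is_tree N TE \<Longrightarrow> {u,w} \<in> TE \<Longrightarrow> u \<notin> tside TE {u,w} w"
  using acyc unfolding tside_def by blast

lemma side_sub2:
  assumes t: "is_tree N TE" and e: "{u,v} \<in> TE" and e1: "{u,w1} \<in> TE"
    and w1: "w1 \<noteq> u" "w1 \<noteq> v"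
  shows "tside TE {u,w1} w1 \<subseteq> tside TE {u,v} u"
proof
  fix x assume "x \<in> tside TE {u,w1} w1"
  then have "(w1,x) \<in> (tadj (TE - {{u,w1}}))\<^sup>*" unfolding tside_def by simp
  then have "(u,x) \<in> (tadj (TE - {{u,v}}))\<^sup>*"
  proof (induction rule: rtrancl_induct)
    case base
    have "{u,w1} \<noteq> {u,v}" using w1 by (auto simp: doubleton_eq_iff)
    then have "(u,w1) \<in> tadj (TE - {{u,v}})" using e1 by (simp add: tadj_in)
    then show ?case by simp
  next
    case (step y z)
    have yz: "{y,z} \<in> TE" "{y,z} \<noteq> {u,w1}" using step.hyps(2) by (auto simp: tadj_in)
    have nu: "(w1,u) \<notin> (tadj (TE - {{u,w1}}))\<^sup>*" using acyc[OF t e1] .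
    have "{y,z} \<noteq> {u,v}"
    proof
      assume "{y,z} = {u,v}"
      then have "y = u \<or> (y = v \<and> z = u)" by (auto simp: doubleton_eq_iff)
      then show False
      proof
        assume "y = u" then show False using step.hyps(1) nu by simp
      next
        assume "y = v \<and> z = u"
        then show False using step.hyps nu by (meson rtrancl.rtrancl_into_rtrancl)
      qed
    qed
    then have "(y,z) \<in> tadj (TE - {{u,v}})" using yz(1) by (simp add: tadj_in)
    then show ?case using step.IH by (simp add: rtrancl.rtrancl_into_rtrancl)
  qed
  then show "x \<in> tside TE {u,v} u" unfolding tside_def by simp
qed


lemma leaf_edges:
  assumes t: "is_tree N TE" and e: "{u,v} \<in> TE" and d: "tdeg TE u \<le> 1"
  shows "{e\<in>TE. u\<in>e} = {{u,v}}"
proof -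
  have fin: "finite {e\<in>TE. u\<in>e}" using tdeg_fin[OF t] .
  have c: "card {e\<in>TE. u\<in>e} \<le> Suc 0" using d unfolding tdeg_def by simp
  have uv: "{u,v} \<in> {e\<in>TE. u\<in>e}" using e by auto
  have all: "\<forall>a\<in>{e\<in>TE. u\<in>e}. \<forall>b\<in>{e\<in>TE. u\<in>e}. a = b"
    using card_le_Suc0_iff_eq[OF fin] c by (rule iffD1)
  show ?thesis
  proof (rule set_eqI, rule iffI)
    fix x assume "x \<in> {e\<in>TE. u\<in>e}"
    then have "x = {u,v}" using all uv by (rule_tac bspec[OF bspec[OF all]])
    then show "x \<in> {{u,v}}" by simp
  next
    fix x assume "x \<in> {{u,v}}"
    then show "x \<in> {e\<in>TE. u\<in>e}" using uv by simp
  qed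
qed

lemma edge_nodes: "is_tree N TE \<Longrightarrow> {u,v} \<in> TE \<Longrightarrow> u \<in> N \<and> v \<in> N \<and> u \<noteq> v"
proof -
  assume t: "is_tree N TE" and e: "{u,v} \<in> TE"
  obtain p q where "p \<in> N" "q \<in> N" "p \<noteq> q" "{u,v} = {p,q}" using tree_edge[OF t e] by blast
  then show ?thesis by (auto simp: doubleton_eq_iff)
qed

lemma balance:
  assumes t: "is_tree N TE" and deg: "\<forall>u\<in>N. tdeg TE u \<le> 1 \<or> tdeg TE u = 3"
    and M: "card (tleaves N TE) \<ge> 2"
  shows "\<exists>u v. {u,v} \<in> TE \<and> card (tleaves N TE) \<le> 3 * card (tleaves N TE \<inter> tside TE {u,v} u)
     \<and> 3 * card (tleaves N TE \<inter> tside TE {u,v} u) \<le> 2 * card (tleaves N TE)"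
proof -
  define L where "L = tleaves N TE"
  define sc where "sc u v = card (L \<inter> tside TE {u,v} u)" for u v
  have finN: "finite N" using t unfolding is_tree_def by simp
  have LN: "L \<subseteq> N" unfolding L_def tleaves_def by auto
  have key: "\<forall>u v. card (tside TE {u,v} u) = c \<longrightarrow> {u,v} \<in> TE \<longrightarrow> card L \<le> 3 * sc u v \<longrightarrow>
     (\<exists>u v. {u,v}\<in>TE \<and> card L \<le> 3*sc u v \<and> 3 * sc u v \<le> 2*card L)" for c
  proof (induction c rule: less_induct)
    case (less c)
    show ?case
    proof (intro allI impI)
      fix u v assume c: "card (tside TE {u,v} u) = c" and e: "{u,v} \<in> TE" and lo: "card L \<le> 3 * sc u v"
      show "\<exists>u v. {u,v}\<in>TE \<and> card L \<le> 3*sc u v \<and> 3 * sc u v \<le> 2*card L"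
      proof (cases "3 * sc u v \<le> 2 * card L")
        case True then show ?thesis using e lo by blast
      next
        case False
        have uN: "u \<in> N" using edge_nodes[OF t e] by simp
        have d3: "tdeg TE u = 3"
        proof (rule ccontr)
          assume "tdeg TE u \<noteq> 3" then have "tdeg TE u \<le> 1" using deg uN by auto
          then have "tside TE {u,v} u = {u}" by (rule side_leaf[OF t e])
          then have "L \<inter> tside TE {u,v} u \<subseteq> {u}" by simp
          then have "sc u v \<le> 1" unfolding sc_def
            by (metis card.empty card.insert finite.intros(1) empty_iff card_mono finite.emptyI finite_insert One_nat_def)
          then show False using False M unfolding L_def by simp
        qed
        obtain w1 w2 where w: "{u,w1}\<in>TE" "{u,w2}\<in>TE" "w1\<noteq>w2" "w1\<noteq>v" "w2\<noteq>v" "w1\<noteq>u" "w2\<noteq>u"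
          "\<forall>e\<in>TE. u\<in>e \<longrightarrow> e = {u,v} \<or> e={u,w1} \<or> e={u,w2}"
          using deg3[OF t e d3] by blast
        have ul: "u \<notin> L" using d3 unfolding L_def tleaves_def by simp
        have w1N: "w1 \<in> N" and w2N: "w2 \<in> N" using edge_nodes[OF t w(1)] edge_nodes[OF t w(2)] by auto
        have f1: "finite (tside TE {u,w1} w1)" using side_sub[OF t w1N] finN finite_subset by blast
        have f2: "finite (tside TE {u,w2} w2)" using side_sub[OF t w2N] finN finite_subset by blast
        have f0: "finite (tside TE {u,v} u)" using side_sub[OF t uN] finN finite_subset by blast
        have sub: "L \<inter> tside TE {u,v} u \<subseteq> (L \<inter> tside TE {u,w1} w1) \<union> (L \<inter> tside TE {u,w2} w2)"
          using side_split[OF t e w(6) w(7) w(8)] ul by blast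
        have "sc u v \<le> card ((L \<inter> tside TE {u,w1} w1) \<union> (L \<inter> tside TE {u,w2} w2))"
          unfolding sc_def using sub f1 f2 by (intro card_mono) auto
        also have "\<dots> \<le> card (L \<inter> tside TE {u,w1} w1) + card (L \<inter> tside TE {u,w2} w2)"
          by (rule card_Un_le)
        finally have scle: "sc u v \<le> card (L \<inter> tside TE {u,w1} w1) + card (L \<inter> tside TE {u,w2} w2)" .
        obtain w where ww: "w = w1 \<or> w = w2" and big: "card L < 3 * card (L \<inter> tside TE {u,w} w)"
        proof (cases "card (L \<inter> tside TE {u,w2} w2) \<le> card (L \<inter> tside TE {u,w1} w1)")
          case True
          then have "card L < 3 * card (L \<inter> tside TE {u,w1} w1)" using scle False by linarith
          then show ?thesis using that by blast
        next
          case False2: False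
          then have "card L < 3 * card (L \<inter> tside TE {u,w2} w2)" using scle False by linarith
          then show ?thesis using that by blast
        qed
        have ew: "{u,w} \<in> TE" "w \<noteq> u" "w \<noteq> v" using ww w by auto
        have wN: "w \<in> N" using edge_nodes[OF t ew(1)] by simp
        have "tside TE {u,w} w \<subseteq> tside TE {u,v} u" by (rule side_sub2[OF t e ew(1) ew(2) ew(3)])
        moreover have "u \<in> tside TE {u,v} u" by (rule side_self)
        moreover have "u \<notin> tside TE {u,w} w" by (rule side_not[OF t ew(1)])
        ultimately have "tside TE {u,w} w \<subset> tside TE {u,v} u" by blast
        then have lt: "card (tside TE {u,w} w) < c" using c f0 psubset_card_mono by blast
        have eq: "{w,u} = {u,w}" by (rule insert_commute)
        have "card L \<le> 3 * sc w u" unfolding sc_def eq using big by simp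
        moreover have "{w,u} \<in> TE" using ew(1) eq by simp
        moreover have "card (tside TE {w,u} w) = card (tside TE {u,w} w)" using eq by simp
        ultimately show ?thesis using less.IH[OF lt] by blast
      qed
    qed
  qed
  obtain l where l: "l \<in> L" using M unfolding L_def by (metis card.empty ex_in_conv not_numeral_le_zero)
  have "card (L - {l}) \<ge> 1" using M l unfolding L_def by simp
  then obtain l' where l': "l' \<in> L" "l' \<noteq> l" by (metis One_nat_def card.empty Diff_iff ex_in_conv insertCI not_one_le_zero)
  have lN: "l \<in> N" "l' \<in> N" using l l' LN by auto
  have "(l,l') \<in> (tadj TE)\<^sup>*" using tree_conn[OF t lN] .
  then obtain p where p: "(l,p) \<in> tadj TE" using l' by (metis converse_rtranclE)
  have elp: "{l,p} \<in> TE" using p by (simp add: tadj_in)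
  have pN: "p \<in> N" using edge_nodes[OF t elp] by simp
  have dl: "tdeg TE l \<le> 1" using l unfolding L_def tleaves_def by simp
  have LE: "{e\<in>TE. l\<in>e} = {{l,p}}" by (rule leaf_edges[OF t elp dl])
  have pl: "{p,l} = {l,p}" by (rule insert_commute)
  have cov: "x = l \<or> x \<in> tside TE {p,l} p" if "x \<in> N" for x
  proof -
    have "(p,x) \<in> (tadj TE)\<^sup>*" using tree_conn[OF t pN that] .
    then show ?thesis
    proof (induction rule: rtrancl_induct)
      case base then show ?case using side_self by simp
    next
      case (step y z)
      have yz: "{y,z} \<in> TE" using step.hyps(2) by (simp add: tadj_in)
      from step.IH show ?case
      proof
        assume "y = l"
        then have "{y,z} \<in> {e\<in>TE. l\<in>e}" using yz by simp
        then have "{y,z} = {l,p}" using LE by simp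
        then have "z = l \<or> z = p" by (auto simp: doubleton_eq_iff)
        then show ?thesis using side_self[of p] by auto
      next
        assume ys: "y \<in> tside TE {p,l} p"
        show ?thesis
        proof (cases "{y,z} = {p,l}")
          case True
          then have "z = l \<or> z = p" by (auto simp: doubleton_eq_iff)
          then show ?thesis using side_self[of p] by auto
        next
          case False
          then have "(y,z) \<in> tadj (TE - {{p,l}})" using yz by (simp add: tadj_in)
          then have "z \<in> tside TE {p,l} p" using ys unfolding tside_def
            by (simp add: rtrancl.rtrancl_into_rtrancl)
          then show ?thesis by simp
        qed
      qed
    qed
  qed
  have "L - {l} \<subseteq> L \<inter> tside TE {p,l} p" using cov LN by blast
  moreover have "finite (L \<inter> tside TE {p,l} p)" using LN finN finite_subset by blast
  ultimately have "card (L - {l}) \<le> sc p l" unfolding sc_def by (rule card_mono[rotated])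
  then have "card L \<le> 3 * sc p l" using M l unfolding L_def by simp
  moreover have "{p,l} \<in> TE" using elp pl by simp
  ultimately have "\<exists>u v. {u,v}\<in>TE \<and> card L \<le> 3*sc u v \<and> 3 * sc u v \<le> 2*card L"
    using key by blast
  then show ?thesis unfolding sc_def L_def by blast
qed


lemma card_filt_insert:
  assumes "E1 \<notin> S" "finite S"
  shows "card {e\<in>insert E1 S. x\<in>e} = (if x\<in>E1 then 1 else 0) + card {e\<in>S. x\<in>e}"
proof (cases "x \<in> E1")
  case True
  then have "{e\<in>insert E1 S. x\<in>e} = insert E1 {e\<in>S. x\<in>e}" by auto
  moreover have "E1 \<notin> {e\<in>S. x\<in>e}" using assms by simp
  moreover have "finite {e\<in>S. x\<in>e}" using assms by simp
  ultimately show ?thesis using True by simp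
next
  case False
  then have "{e\<in>insert E1 S. x\<in>e} = {e\<in>S. x\<in>e}" by auto
  then show ?thesis using False by simp
qed

lemma tree_base:
  "is_tree {0::nat,1} {{0,1}} \<and> (\<forall>u\<in>{0,1}. tdeg {{0,1}} u = 1 \<or> tdeg {{0,1}} u = 3)
   \<and> card (tleaves {0,1} {{0,1}}) = 2"
proof -
  have ta: "tadj {{0::nat,1}} = {(0,1),(1,0)}" unfolding tadj_def by (auto simp: doubleton_eq_iff)
  have conn: "\<forall>u\<in>{0::nat,1}. \<forall>v\<in>{0,1}. (u,v) \<in> (tadj {{0,1}})\<^sup>*"
    unfolding ta by auto
  have d0: "{e\<in>{{0::nat,1}}. 0\<in>e} = {{0,1}}" by auto
  have d1: "{e\<in>{{0::nat,1}}. 1\<in>e} = {{0,1}}" by auto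
  have deg: "tdeg {{0::nat,1}} 0 = 1" "tdeg {{0::nat,1}} 1 = 1" unfolding tdeg_def d0 d1 by simp_all
  have lv: "tleaves {0::nat,1} {{0,1}} = {0,1}" unfolding tleaves_def using deg by auto
  show ?thesis
    unfolding is_tree_def using conn deg lv by auto
qed

lemma tree_step:
  assumes t: "is_tree N TE" and deg: "\<forall>u\<in>N. tdeg TE u = 1 \<or> tdeg TE u = 3"
    and M: "card (tleaves N TE) = M" "M \<ge> 2"
  shows "\<exists>N' TE'. is_tree N' TE' \<and> (\<forall>u\<in>N'. tdeg TE' u = 1 \<or> tdeg TE' u = 3)
     \<and> card (tleaves N' TE') = Suc M"
proof -
  have finN: "finite N" using t unfolding is_tree_def by simp
  have finTE: "finite TE" using tree_fin[OF t] .
  obtain l where l: "l \<in> tleaves N TE" using M by (metis card.empty ex_in_conv not_numeral_le_zero)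
  have lN: "l \<in> N" using l unfolding tleaves_def by simp
  have dl: "tdeg TE l = 1" using l deg lN unfolding tleaves_def by auto
  define a where "a = Suc (Max N)"
  define b where "b = Suc a"
  have aN: "a \<notin> N" unfolding a_def using Max_ge[OF finN] by (meson Suc_n_not_le_n)
  have bN: "b \<notin> N" unfolding b_def a_def using Max_ge[OF finN] by (metis Suc_n_not_le_n le_Suc_eq)
  have ab: "a \<noteq> b" "a \<noteq> l" "b \<noteq> l" using aN bN lN unfolding b_def by auto
  define N' where "N' = insert a (insert b N)"
  define TE' where "TE' = insert {l,a} (insert {l,b} TE)"
  have notin_a: "e \<in> TE \<Longrightarrow> a \<notin> e" for e using tree_edge[OF t] aN by fastforce
  have notin_b: "e \<in> TE \<Longrightarrow> b \<notin> e" for e using tree_edge[OF t] bN by fastforce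
  have la_TE: "{l,a} \<notin> TE" using notin_a by blast
  have lb_TE: "{l,b} \<notin> TE" using notin_b by blast
  have la_lb: "{l,a} \<noteq> {l,b}" using ab by (auto simp: doubleton_eq_iff)
  have n1: "{l,a} \<notin> insert {l,b} TE" using la_TE la_lb by simp
  have cTE': "card TE' = card TE + 2" unfolding TE'_def using n1 lb_TE finTE by simp
  have cN': "card N' = card N + 2" unfolding N'_def using aN bN ab finN by simp
  have cTE: "card TE = card N - 1" "card N \<ge> 1" using t lN finN unfolding is_tree_def
    by (auto simp: Suc_le_eq card_gt_0_iff)
  have tdeg': "tdeg TE' x = (if x\<in>{l,a} then 1 else 0) + (if x\<in>{l,b} then 1 else 0) + tdeg TE x" for x
    unfolding tdeg_def TE'_def
    using card_filt_insert[OF n1, of x] card_filt_insert[OF lb_TE finTE, of x] finTE by simp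
  have "{e\<in>TE. a\<in>e} = {}" using notin_a by blast
  then have dega: "tdeg TE a = 0" unfolding tdeg_def by (metis card.empty)
  have "{e\<in>TE. b\<in>e} = {}" using notin_b by blast
  then have degb: "tdeg TE b = 0" unfolding tdeg_def by (metis card.empty)
  have conn_l: "(l,x) \<in> (tadj TE')\<^sup>*" if xN: "x \<in> N'" for x
  proof -
    have sub: "TE \<subseteq> TE'" unfolding TE'_def by auto
    have "x = a \<or> x = b \<or> x \<in> N" using xN unfolding N'_def by blast
    then consider "x = a" | "x = b" | "x \<in> N" by blast
    then show ?thesis
    proof cases
      case 1
      have "(l,a) \<in> tadj TE'" unfolding TE'_def by (simp add: tadj_in)
      then show ?thesis using 1 by simp
    next
      case 2
      have "(l,b) \<in> tadj TE'" unfolding TE'_def by (simp add: tadj_in)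
      then show ?thesis using 2 by simp
    next
      case 3
      then show ?thesis using tadj_mono[OF sub tree_conn[OF t lN 3]] by simp
    qed
  qed
  have tree': "is_tree N' TE'"
    unfolding is_tree_def
  proof (intro conjI)
    show "finite N'" unfolding N'_def using finN by simp
    show "N' \<noteq> {}" unfolding N'_def by simp
    show "\<forall>e\<in>TE'. \<exists>u v. u \<in> N' \<and> v \<in> N' \<and> u \<noteq> v \<and> e = {u, v}"
    proof
      fix e assume "e \<in> TE'"
      then consider "e = {l,a}" | "e = {l,b}" | "e \<in> TE" unfolding TE'_def by blast
      then show "\<exists>u v. u \<in> N' \<and> v \<in> N' \<and> u \<noteq> v \<and> e = {u, v}"
      proof cases
        case 1 then show ?thesis using lN ab unfolding N'_def by blast
      next
        case 2 then show ?thesis using lN ab unfolding N'_def by blast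
      next
        case 3
        then obtain u v where "u \<in> N" "v \<in> N" "u \<noteq> v" "e = {u,v}" using tree_edge[OF t] by blast
        then show ?thesis unfolding N'_def by blast
      qed
    qed
    show "\<forall>u\<in>N'. \<forall>v\<in>N'. (u, v) \<in> (tadj TE')\<^sup>*"
    proof (intro ballI)
      fix u v assume "u \<in> N'" "v \<in> N'"
      then have "(u,l) \<in> (tadj TE')\<^sup>*" "(l,v) \<in> (tadj TE')\<^sup>*" using conn_l rt_sym by blast+
      then show "(u, v) \<in> (tadj TE')\<^sup>*" by (rule rtrancl_trans)
    qed
    show "card TE' = card N' - 1" using cTE' cN' cTE by simp
  qed
  have deg': "\<forall>u\<in>N'. tdeg TE' u = 1 \<or> tdeg TE' u = 3"
  proof
    fix u assume u: "u \<in> N'"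
    consider "u = a" | "u = b" | "u = l" | "u \<in> N" "u \<noteq> l" using u unfolding N'_def by blast
    then show "tdeg TE' u = 1 \<or> tdeg TE' u = 3"
    proof cases
      case 1 then show ?thesis using tdeg' dega ab by simp
    next
      case 2 then show ?thesis using tdeg' degb ab by simp
    next
      case 3 then show ?thesis using tdeg' dl ab by simp
    next
      case 4
      then have "u \<noteq> a" "u \<noteq> b" using aN bN by auto
      then have "tdeg TE' u = tdeg TE u" using tdeg'[of u] 4 by simp
      then show ?thesis using deg 4 by simp
    qed
  qed
  have lv: "tleaves N' TE' = insert a (insert b (tleaves N TE - {l}))"
  proof (rule set_eqI)
    fix x
    show "x \<in> tleaves N' TE' \<longleftrightarrow> x \<in> insert a (insert b (tleaves N TE - {l}))"
    proof (cases "x = a \<or> x = b \<or> x = l")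
      case True
      then consider "x = a" | "x = b" | "x = l" by blast
      then show ?thesis
      proof cases
        case 1
        then have "tdeg TE' x = 1" using tdeg'[of x] dega ab by simp
        then show ?thesis using 1 unfolding tleaves_def N'_def by simp
      next
        case 2
        then have "tdeg TE' x = 1" using tdeg'[of x] degb ab by simp
        then show ?thesis using 2 unfolding tleaves_def N'_def by simp
      next
        case 3
        then have "tdeg TE' x = 3" using tdeg'[of x] dl ab by simp
        then show ?thesis using 3 ab unfolding tleaves_def N'_def by simp
      qed
    next
      case False
      then have "tdeg TE' x = tdeg TE x" using tdeg'[of x] by simp
      then show ?thesis using False unfolding tleaves_def N'_def by simp
    qed
  qed
  have finL: "finite (tleaves N TE)" using finN unfolding tleaves_def by simp
  have "a \<notin> tleaves N TE" "b \<notin> tleaves N TE" using aN bN unfolding tleaves_def by auto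
  then have "card (tleaves N' TE') = Suc M" unfolding lv using finL ab l M by simp
  then show ?thesis using tree' deg' by blast
qed

lemma tree_exists:
  assumes "M \<ge> 2"
  shows "\<exists>N TE. is_tree N TE \<and> (\<forall>u\<in>N. tdeg TE u = 1 \<or> tdeg TE u = 3) \<and> card (tleaves N TE) = M"
  using assms
proof (induction M rule: nat_induct_at_least)
  case base then show ?case using tree_base by blast
next
  case (Suc n) then show ?case using tree_step by blast
qed

lemma decomp_exists:
  assumes "finite (fst G)" "card (fst G) \<ge> 2"
  shows "\<exists>N TE lam. is_rank_decomp G N TE lam"
proof -
  obtain N TE where t: "is_tree N TE" "\<forall>u\<in>N. tdeg TE u = 1 \<or> tdeg TE u = 3"
      "card (tleaves N TE) = card (fst G)"
    using tree_exists[OF assms(2)] by blast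
  have "finite (tleaves N TE)" using t(1) unfolding is_tree_def tleaves_def by simp
  then obtain lam where "bij_betw lam (tleaves N TE) (fst G)"
    using finite_same_card_bij assms(1) t(3) by blast
  moreover have "\<forall>u\<in>N. tdeg TE u \<le> 1 \<or> tdeg TE u = 3" using t(2) by auto
  ultimately show ?thesis unfolding is_rank_decomp_def using t(1) by blast
qed


lemma width_ge:
  assumes t: "is_tree N TE" and e: "{u,v} \<in> TE"
  shows "cutrank G (lam ` (tleaves N TE \<inter> tside TE {u,v} u)) \<le> decomp_width G N TE lam"
proof -
  let ?S = "{cutrank G (lam ` (tleaves N TE \<inter> tside TE {u,v} u)) | u v. {u,v} \<in> TE}"
  have "?S \<subseteq> (\<lambda>(u,v). cutrank G (lam ` (tleaves N TE \<inter> tside TE {u,v} u))) ` (N \<times> N)"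
  proof
    fix x assume "x \<in> ?S"
    then obtain u v where "{u,v} \<in> TE" "x = cutrank G (lam ` (tleaves N TE \<inter> tside TE {u,v} u))" by blast
    moreover then have "u \<in> N" "v \<in> N" using edge_nodes[OF t] by blast+
    ultimately show "x \<in> (\<lambda>(u,v). cutrank G (lam ` (tleaves N TE \<inter> tside TE {u,v} u))) ` (N \<times> N)"
      by force
  qed
  moreover have "finite N" using t unfolding is_tree_def by simp
  ultimately have "finite ?S" using finite_subset by blast
  then have "finite ({0} \<union> ?S)" by simp
  moreover have "cutrank G (lam ` (tleaves N TE \<inter> tside TE {u,v} u)) \<in> {0} \<union> ?S" using e by blast
  ultimately show ?thesis unfolding decomp_width_def by (rule Max_ge)
qed

lemma rw_lb:
  assumes fin: "finite (fst G)" and two: "card (fst G) \<ge> 2"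
    and H: "\<And>A. A \<subseteq> fst G \<Longrightarrow> card (fst G) \<le> 3 * card A \<Longrightarrow> 3 * card A \<le> 2 * card (fst G) \<Longrightarrow> n \<le> cutrank G A"
  shows "n \<le> rankwidth G"
proof -
  let ?P = "\<lambda>w. \<exists>N TE lam. is_rank_decomp G N TE lam \<and> decomp_width G N TE lam \<le> w"
  obtain N0 TE0 lam0 where "is_rank_decomp G N0 TE0 lam0" using decomp_exists[OF fin two] by blast
  then have "?P (decomp_width G N0 TE0 lam0)" by blast
  then have "?P (rankwidth G)" unfolding rankwidth_def by (rule LeastI)
  then obtain N TE lam where d: "is_rank_decomp G N TE lam" and w: "decomp_width G N TE lam \<le> rankwidth G"
    by blast
  have t: "is_tree N TE" and deg: "\<forall>u\<in>N. tdeg TE u \<le> 1 \<or> tdeg TE u = 3"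
    and bij: "bij_betw lam (tleaves N TE) (fst G)" using d unfolding is_rank_decomp_def by auto
  have cL: "card (tleaves N TE) = card (fst G)" using bij by (rule bij_betw_same_card)
  obtain u v where e: "{u,v} \<in> TE"
    and b1: "card (tleaves N TE) \<le> 3 * card (tleaves N TE \<inter> tside TE {u,v} u)"
    and b2: "3 * card (tleaves N TE \<inter> tside TE {u,v} u) \<le> 2 * card (tleaves N TE)"
    using balance[OF t deg] two cL by auto
  let ?A = "lam ` (tleaves N TE \<inter> tside TE {u,v} u)"
  have inj: "inj_on lam (tleaves N TE \<inter> tside TE {u,v} u)"
    using bij bij_betw_def inj_on_subset by (metis inf_le1)
  have cA: "card ?A = card (tleaves N TE \<inter> tside TE {u,v} u)" using card_image[OF inj] .
  have sub: "?A \<subseteq> fst G" using bij bij_betw_def by (metis image_mono inf_le1)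
  have "n \<le> cutrank G ?A" using H[OF sub] b1 b2 cA cL by simp
  also have "\<dots> \<le> decomp_width G N TE lam" by (rule width_ge[OF t e])
  finally show ?thesis using w by simp
qed


lemma cutrank_ge:
  assumes finA: "finite A" and RA: "R \<subseteq> A"
    and ind: "\<forall>T. T \<subseteq> R \<and> T \<noteq> {} \<longrightarrow> (\<exists>c \<in> fst G - A. odd (card {t \<in> T. {t, c} \<in> snd G}))"
  shows "card R \<le> cutrank G A"
proof -
  let ?S = "{card S | S. S \<subseteq> A \<and> (\<forall>T. T \<subseteq> S \<and> T \<noteq> {} \<longrightarrow>
        (\<exists>c \<in> fst G - A. odd (card {t \<in> T. {t, c} \<in> snd G})))}"
  have "?S \<subseteq> card ` Pow A" by (rule subsetI) (clarsimp simp: image_iff, blast)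
  then have "finite ?S" using finA by (meson finite_Pow_iff finite_imageI finite_subset)
  moreover have "card R \<in> ?S" using RA ind by blast
  ultimately show ?thesis unfolding cutrank_def by (rule Max_ge)
qed

lemma rank_lb:
  assumes finA: "finite A" and finI: "finite I"
    and rA: "\<forall>i\<in>I. r i \<in> A" and cA: "\<forall>j\<in>I. c j \<in> fst G - A" and inj: "inj_on r I"
    and adj: "\<forall>i\<in>I. \<forall>j\<in>I. ({r i, c j} \<in> snd G \<longleftrightarrow> P i j)"
    and pat: "\<forall>J. J \<subseteq> I \<longrightarrow> J \<noteq> {} \<longrightarrow> (\<exists>j\<in>I. odd (card {i\<in>J. P i j}))"
  shows "card I \<le> cutrank G A"
proof -
  have "card (r ` I) \<le> cutrank G A"
  proof (rule cutrank_ge[OF finA])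
    show "r ` I \<subseteq> A" using rA by blast
    show "\<forall>T. T \<subseteq> r ` I \<and> T \<noteq> {} \<longrightarrow> (\<exists>c\<in>fst G - A. odd (card {t \<in> T. {t, c} \<in> snd G}))"
    proof (intro allI impI)
      fix T assume T: "T \<subseteq> r ` I \<and> T \<noteq> {}"
      define J where "J = {i\<in>I. r i \<in> T}"
      have TJ: "T = r ` J" unfolding J_def using T by blast
      have J: "J \<subseteq> I" "J \<noteq> {}" unfolding J_def using T by blast+
      obtain j where j: "j \<in> I" "odd (card {i\<in>J. P i j})" using pat J by blast
      have eq: "{t \<in> T. {t, c j} \<in> snd G} = r ` {i\<in>J. P i j}"
      proof (rule set_eqI, rule iffI)
        fix t assume "t \<in> {t \<in> T. {t, c j} \<in> snd G}"
        then obtain i where "i \<in> J" "t = r i" "{r i, c j} \<in> snd G" unfolding TJ by blast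
        moreover then have "P i j" using adj j(1) J(1) by blast
        ultimately show "t \<in> r ` {i\<in>J. P i j}" by blast
      next
        fix t assume "t \<in> r ` {i\<in>J. P i j}"
        then obtain i where "i \<in> J" "t = r i" "P i j" by blast
        moreover then have "{r i, c j} \<in> snd G" using adj j(1) J(1) by blast
        ultimately show "t \<in> {t \<in> T. {t, c j} \<in> snd G}" unfolding TJ by blast
      qed
      have "{i\<in>J. P i j} \<subseteq> I" using J(1) by blast
      then have "inj_on r {i\<in>J. P i j}" by (rule inj_on_subset[OF inj])
      then have "card {t \<in> T. {t, c j} \<in> snd G} = card {i\<in>J. P i j}" unfolding eq by (rule card_image)
      then show "\<exists>c\<in>fst G - A. odd (card {t \<in> T. {t, c} \<in> snd G})" using j cA by metis
    qed
  qed
  then show ?thesis using card_image[OF inj] by simp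
qed

lemma pat_eq: "\<forall>J. J \<subseteq> I \<longrightarrow> J \<noteq> {} \<longrightarrow> (\<exists>j\<in>I. odd (card {i\<in>J. i = j}))"
proof (intro allI impI)
  fix J assume "J \<subseteq> I" "J \<noteq> {}"
  then obtain j where "j \<in> J" by blast
  then have "{i\<in>J. i = j} = {j}" by blast
  then have "odd (card {i\<in>J. i = j})" by simp
  moreover have "j \<in> I" using \<open>j \<in> J\<close> \<open>J \<subseteq> I\<close> by blast
  ultimately show "\<exists>j\<in>I. odd (card {i\<in>J. i = j})" by blast
qed

lemma pat_le:
  fixes I :: "nat set"
  assumes "finite I"
  shows "\<forall>J. J \<subseteq> I \<longrightarrow> J \<noteq> {} \<longrightarrow> (\<exists>j\<in>I. odd (card {i\<in>J. i \<le> j}))"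
proof (intro allI impI)
  fix J assume J: "J \<subseteq> I" "J \<noteq> {}"
  have fJ: "finite J" using J assms finite_subset by blast
  have "{i\<in>J. i \<le> Min J} = {Min J}" using Min_le[OF fJ] Min_in[OF fJ J(2)] by (auto intro: antisym)
  moreover have "Min J \<in> I" using Min_in[OF fJ J(2)] J by blast
  ultimately show "\<exists>j\<in>I. odd (card {i\<in>J. i \<le> j})" by (intro bexI[of _ "Min J"]) simp_all
qed

lemma pat_ge:
  fixes I :: "nat set"
  assumes "finite I"
  shows "\<forall>J. J \<subseteq> I \<longrightarrow> J \<noteq> {} \<longrightarrow> (\<exists>j\<in>I. odd (card {i\<in>J. j \<le> i}))"
proof (intro allI impI)
  fix J assume J: "J \<subseteq> I" "J \<noteq> {}"
  have fJ: "finite J" using J assms finite_subset by blast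
  have "{i\<in>J. Max J \<le> i} = {Max J}" using Max_ge[OF fJ] Max_in[OF fJ J(2)] by (auto intro: antisym)
  moreover have "Max J \<in> I" using Max_in[OF fJ J(2)] J by blast
  ultimately show "\<exists>j\<in>I. odd (card {i\<in>J. j \<le> i})" by (intro bexI[of _ "Max J"]) simp_all
qed

lemma pat_ne:
  assumes fI: "finite I" and ev: "even (card I)"
  shows "\<forall>J. J \<subseteq> I \<longrightarrow> J \<noteq> {} \<longrightarrow> (\<exists>j\<in>I. odd (card {i\<in>J. i \<noteq> j}))"
proof (intro allI impI)
  fix J assume J: "J \<subseteq> I" "J \<noteq> {}"
  have fJ: "finite J" using J fI finite_subset by blast
  show "\<exists>j\<in>I. odd (card {i\<in>J. i \<noteq> j})"
  proof (cases "even (card J)")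
    case True
    obtain j where j: "j \<in> J" using J by blast
    have "{i\<in>J. i \<noteq> j} = J - {j}" by blast
    moreover have "card (J - {j}) = card J - 1" using j fJ by simp
    moreover have "card J \<ge> 1" using j fJ by (metis One_nat_def Suc_leI card_gt_0_iff empty_iff)
    ultimately have "odd (card {i\<in>J. i \<noteq> j})" using True by simp
    then show ?thesis using j J by blast
  next
    case False
    then have "J \<noteq> I" using ev by blast
    then obtain j where j: "j \<in> I" "j \<notin> J" using J by blast
    then have "{i\<in>J. i \<noteq> j} = J" by blast
    then show ?thesis using j False by metis
  qed
qed

lemma pigeon:
  assumes fB: "finite B" and fC: "finite C" and im: "f ` B \<subseteq> C" and lt: "card C * q < card B"
  shows "\<exists>c\<in>C. q < card {b\<in>B. f b = c}"
proof (rule ccontr)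
  assume "\<not> ?thesis"
  then have le: "\<forall>c\<in>C. card {b\<in>B. f b = c} \<le> q" by auto
  have "B = (\<Union>c\<in>C. {b\<in>B. f b = c})" using im by blast
  then have "card B \<le> (\<Sum>c\<in>C. card {b\<in>B. f b = c})" using card_UN_le[OF fC] by metis
  also have "\<dots> \<le> card C * q" using sum_bounded_above[of C "\<lambda>c. card {b\<in>B. f b = c}" q] le by simp
  finally show False using lt by simp
qed

lemma change_aux: "P (i::nat) \<Longrightarrow> \<not> P (i + d) \<Longrightarrow> \<exists>t. i \<le> t \<and> t < i + d \<and> P t \<noteq> P (Suc t)"
proof (induction d)
  case 0 then show ?case by simp
next
  case (Suc d)
  show ?case
  proof (cases "P (i + d)")
    case True
    then show ?thesis using Suc.prems by (intro exI[of _ "i + d"]) simp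
  next
    case False
    then obtain t where "i \<le> t" "t < i + d" "P t \<noteq> P (Suc t)" using Suc.IH Suc.prems by blast
    then show ?thesis by (intro exI[of _ t]) simp
  qed
qed

lemma change:
  fixes i j N :: nat
  assumes "P i" "\<not> P j" "1 \<le> i" "i \<le> N" "1 \<le> j" "j \<le> N"
  shows "\<exists>t. 1 \<le> t \<and> t + 1 \<le> N \<and> P t \<noteq> P (t+1)"
proof (cases "i < j")
  case True
  have "\<not> P (i + (j - i))" using assms(2) True by simp
  then obtain t where t: "i \<le> t" "t < i + (j - i)" "P t \<noteq> P (Suc t)"
    using change_aux[of P i "j - i"] assms(1) by blast
  show ?thesis
  proof (intro exI conjI)
    show "1 \<le> t" using t assms by simp
    show "t + 1 \<le> N" using t assms True by simp
    show "P t \<noteq> P (t+1)" using t by simp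
  qed
next
  case False
  then have "j < i" using assms by (cases "i = j") auto
  have "\<not> \<not> P (j + (i - j))" using assms(1) \<open>j < i\<close> by simp
  then obtain t where t: "j \<le> t" "t < j + (i - j)" "(\<not> P t) \<noteq> (\<not> P (Suc t))"
    using change_aux[of "\<lambda>x. \<not> P x" j "i - j"] assms(2) by blast
  show ?thesis
  proof (intro exI conjI)
    show "1 \<le> t" using t assms by simp
    show "t + 1 \<le> N" using t assms \<open>j < i\<close> by simp
    show "P t \<noteq> P (t+1)" using t by simp
  qed
qed


definition XX :: "nat \<Rightarrow> qv set" where
  "XX N = (\<lambda>(j,a). Xv j a) ` ({1..N} \<times> {1..N})"

definition LV :: "nat \<Rightarrow> nat \<Rightarrow> qv set" where
  "LV N j = {Xv p x | p x. (p = j \<or> p + 1 = j) \<and> 1 \<le> p \<and> x \<in> {1..N}}"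

lemma mod3: "(i::nat) mod 3 = j mod 3 \<Longrightarrow> i \<noteq> j \<Longrightarrow> i + 3 \<le> j \<or> j + 3 \<le> i"
  by presburger

lemma inj_Xv: "inj_on (\<lambda>(j,a). Xv j a) S"
  by (auto simp: inj_on_def)

lemma card_XX: "card (XX N) = N * N"
  unfolding XX_def using card_image[OF inj_Xv[of "{1..N} \<times> {1..N}"]] by (simp add: card_cartesian_product)

lemma finite_XX: "finite (XX N)" unfolding XX_def by simp

lemma XX_mem: "Xv j a \<in> XX N \<longleftrightarrow> j \<in> {1..N} \<and> a \<in> {1..N}"
  unfolding XX_def by auto

lemma XX_elim: "x \<in> XX N \<Longrightarrow> \<exists>j a. x = Xv j a \<and> j \<in> {1..N} \<and> a \<in> {1..N}"
  unfolding XX_def by auto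

lemma img_mem: "j \<in> J \<Longrightarrow> a \<in> B \<Longrightarrow> Xv j a \<in> (\<lambda>(j,a). Xv j a) ` (J \<times> B)"
  by (rule rev_image_eqI[of "(j,a)"]) auto

lemma LV_XX: "1 \<le> j \<Longrightarrow> j \<le> N \<Longrightarrow> LV N j \<subseteq> XX N"
  unfolding LV_def XX_def by force

lemma nonadj:
  assumes H1: "\<forall>j j' a b. j + 2 \<le> j' \<longrightarrow> {Xv j a, Xv j' b} \<notin> snd G"
    and r: "r \<in> LV N i" and c: "c \<in> LV N j" and ij: "i + 3 \<le> j \<or> j + 3 \<le> i"
  shows "{r, c} \<notin> snd G"
proof -
  obtain p x where px: "r = Xv p x" "p = i \<or> p + 1 = i" using r unfolding LV_def by blast
  obtain q y where qy: "c = Xv q y" "q = j \<or> q + 1 = j" using c unfolding LV_def by blast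
  show ?thesis
  proof (cases "i + 3 \<le> j")
    case True
    then have "p + 2 \<le> q" using px qy by auto
    then show ?thesis using H1 px qy by blast
  next
    case False
    then have "q + 2 \<le> p" using px qy ij by auto
    then have "{Xv q y, Xv p x} \<notin> snd G" using H1 by blast
    then show ?thesis using px qy by (simp add: insert_commute)
  qed
qed


lemma bal_bounds:
  assumes finV: "finite V" and XXV: "XX N \<subseteq> V" and rest: "card (V - XX N) \<le> 2*N+2"
    and N: "25 \<le> N" and AV: "A \<subseteq> V" and b1: "card V \<le> 3 * card A" and b2: "3 * card A \<le> 2 * card V"
  shows "N*N \<le> 4*card (A \<inter> XX N) \<and> N*N \<le> 4*card (XX N - A)"
proof -
  have NN: "25 * N \<le> N * N" using N by simp
  have cV: "card V = N*N + card (V - XX N)"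
    using card_Diff_subset[OF finite_XX XXV] card_XX[of N] card_mono[OF finV XXV] by simp
  have finA: "finite A" using finV AV finite_subset by blast
  have "A \<subseteq> (A \<inter> XX N) \<union> (V - XX N)" using AV by blast
  then have "card A \<le> card ((A \<inter> XX N) \<union> (V - XX N))" using finV finA by (intro card_mono) auto
  also have "\<dots> \<le> card (A \<inter> XX N) + card (V - XX N)" by (rule card_Un_le)
  finally have c1: "card A \<le> card (A \<inter> XX N) + card (V - XX N)" .
  have cVA: "card (V - A) = card V - card A" using card_Diff_subset[OF finA AV] .
  have "V - A \<subseteq> (XX N - A) \<union> (V - XX N)" by blast
  then have "card (V - A) \<le> card ((XX N - A) \<union> (V - XX N))" using finV finite_XX by (intro card_mono) auto
  also have "\<dots> \<le> card (XX N - A) + card (V - XX N)" by (rule card_Un_le)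
  finally have c2: "card (V - A) \<le> card (XX N - A) + card (V - XX N)" .
  have "card A \<le> card V" using card_mono[OF finV AV] .
  then have cVA': "card (V - A) + card A = card V" using cVA by simp
  have g1: "N*N \<le> 4*card (A \<inter> XX N)" using c1 cV b1 rest NN N by linarith
  have g2: "N*N \<le> 4*card (XX N - A)" using c2 cVA' cV b2 rest NN N by linarith
  show ?thesis using g1 g2 by simp
qed


lemma case_mix:
  fixes G :: "qv graph"
  assumes finV: "finite (fst G)" and XXV: "XX N \<subseteq> fst G" and AV: "A \<subseteq> fst G" and n1: "1 \<le> n"
    and H1: "\<forall>j j' a b. j + 2 \<le> j' \<longrightarrow> {Xv j a, Xv j' b} \<notin> snd G"
    and H2: "\<forall>A j a b. 1 \<le> j \<longrightarrow> j \<le> N \<longrightarrow> a \<in> {1..N} \<longrightarrow> b \<in> {1..N} \<longrightarrow> Xv j a \<in> A \<longrightarrow> Xv j b \<notin> A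
       \<longrightarrow> (\<exists>r c. r \<in> A \<and> c \<notin> A \<and> {r,c} \<in> snd G \<and> r \<in> LV N j \<and> c \<in> LV N j)"
    and mix: "3*n \<le> card {j\<in>{1..N}. (\<exists>a\<in>{1..N}. Xv j a \<in> A) \<and> (\<exists>b\<in>{1..N}. Xv j b \<notin> A)}"
  shows "n \<le> cutrank G A"
proof -
  define Mix where "Mix = {j\<in>{1..N}. (\<exists>a\<in>{1..N}. Xv j a \<in> A) \<and> (\<exists>b\<in>{1..N}. Xv j b \<notin> A)}"
  have fM: "finite Mix" unfolding Mix_def by simp
  have im: "(\<lambda>j. j mod 3) ` Mix \<subseteq> {0,1,2::nat}" by auto
  have lt: "card {0,1,2::nat} * (n-1) < card Mix" using mix n1 unfolding Mix_def by simp
  obtain r0 where "r0 \<in> {0,1,2::nat}" "n - 1 < card {j\<in>Mix. j mod 3 = r0}"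
    using pigeon[OF fM _ im lt] by blast
  define C where "C = {j\<in>Mix. j mod 3 = r0}"
  have cC: "n \<le> card C" using \<open>n - 1 < card {j\<in>Mix. j mod 3 = r0}\<close> n1 unfolding C_def by simp
  have fC: "finite C" unfolding C_def using fM by simp
  have CN: "j \<in> C \<Longrightarrow> 1 \<le> j \<and> j \<le> N" for j unfolding C_def Mix_def by simp
  have ex: "\<forall>j\<in>C. \<exists>rc. fst rc \<in> A \<and> snd rc \<notin> A \<and> {fst rc, snd rc} \<in> snd G \<and> fst rc \<in> LV N j \<and> snd rc \<in> LV N j"
  proof
    fix j assume j: "j \<in> C"
    then obtain a b where ab: "a \<in> {1..N}" "b \<in> {1..N}" "Xv j a \<in> A" "Xv j b \<notin> A"
      unfolding C_def Mix_def by blast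
    then obtain r c where "r \<in> A \<and> c \<notin> A \<and> {r,c} \<in> snd G \<and> r \<in> LV N j \<and> c \<in> LV N j"
      using H2 CN[OF j] by blast
    then show "\<exists>rc. fst rc \<in> A \<and> snd rc \<notin> A \<and> {fst rc, snd rc} \<in> snd G \<and> fst rc \<in> LV N j \<and> snd rc \<in> LV N j"
      by (intro exI[of _ "(r,c)"]) simp
  qed
  obtain g where g: "\<forall>j\<in>C. fst (g j) \<in> A \<and> snd (g j) \<notin> A \<and> {fst (g j), snd (g j)} \<in> snd G
      \<and> fst (g j) \<in> LV N j \<and> snd (g j) \<in> LV N j"
    using bchoice[OF ex] by blast
  define r where "r j = fst (g j)" for j
  define c where "c j = snd (g j)" for j
  have sep: "i \<in> C \<Longrightarrow> j \<in> C \<Longrightarrow> i \<noteq> j \<Longrightarrow> i + 3 \<le> j \<or> j + 3 \<le> i" for i j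
    unfolding C_def using mod3 by simp
  have adj: "\<forall>i\<in>C. \<forall>j\<in>C. ({r i, c j} \<in> snd G \<longleftrightarrow> i = j)"
  proof (intro ballI)
    fix i j assume i: "i \<in> C" and j: "j \<in> C"
    show "{r i, c j} \<in> snd G \<longleftrightarrow> i = j"
    proof (cases "i = j")
      case True then show ?thesis using g j unfolding r_def c_def by simp
    next
      case False
      have "{r i, c j} \<notin> snd G"
        using nonadj[OF H1, of "r i" N i "c j" j] g i j sep[OF i j False] unfolding r_def c_def by blast
      then show ?thesis using False by simp
    qed
  qed
  have inj: "inj_on r C"
  proof (rule inj_onI)
    fix i j assume i: "i \<in> C" and j: "j \<in> C" and eq: "r i = r j"
    have "{r j, c j} \<in> snd G" using g j unfolding r_def c_def by simp
    then have "{r i, c j} \<in> snd G" using eq by simp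
    then show "i = j" using adj i j by blast
  qed
  have finA: "finite A" using finV AV finite_subset by blast
  have rA: "\<forall>i\<in>C. r i \<in> A" using g unfolding r_def by blast
  have cA: "\<forall>j\<in>C. c j \<in> fst G - A"
  proof
    fix j assume j: "j \<in> C"
    have "c j \<in> LV N j" "c j \<notin> A" using g j unfolding c_def by auto
    then show "c j \<in> fst G - A" using LV_XX[of j N] CN[OF j] XXV by blast
  qed
  have "card C \<le> cutrank G A" by (rule rank_lb[OF finA fC rA cA inj adj pat_eq])
  then show ?thesis using cC by simp
qed


lemma case_few:
  fixes G :: "qv graph"
  assumes AV: "A \<subseteq> fst G" and n1: "1 \<le> n"
    and H3: "\<forall>A t S. 1 \<le> t \<longrightarrow> t+1 \<le> N \<longrightarrow> S \<subseteq> {1..N} \<longrightarrow> n+1 \<le> card S \<longrightarrow> A \<subseteq> fst G \<longrightarrow>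
        (\<forall>a\<in>S. Xv t a \<in> A \<and> Xv (t+1) a \<notin> A) \<longrightarrow> n \<le> cutrank G A"
    and H3': "\<forall>A t S. 1 \<le> t \<longrightarrow> t+1 \<le> N \<longrightarrow> S \<subseteq> {1..N} \<longrightarrow> n+1 \<le> card S \<longrightarrow> A \<subseteq> fst G \<longrightarrow>
        (\<forall>a\<in>S. Xv (t+1) a \<in> A \<and> Xv t a \<notin> A) \<longrightarrow> n \<le> cutrank G A"
    and num: "3*n \<le> N" "48*n*n < N" "n + 1 \<le> N"
    and bnd: "N*N \<le> 4*card (A \<inter> XX N)" "N*N \<le> 4*card (XX N - A)"
    and few: "card {j\<in>{1..N}. (\<exists>a\<in>{1..N}. Xv j a \<in> A) \<and> (\<exists>b\<in>{1..N}. Xv j b \<notin> A)} < 3*n"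
  shows "n \<le> cutrank G A"
proof -
  define Mix where "Mix = {j\<in>{1..N}. (\<exists>a\<in>{1..N}. Xv j a \<in> A) \<and> (\<exists>b\<in>{1..N}. Xv j b \<notin> A)}"
  define Bi where "Bi = {a\<in>{1..N}. (\<exists>j\<in>{1..N}. Xv j a \<in> A) \<and> (\<exists>j\<in>{1..N}. Xv j a \<notin> A)}"
  have fM: "finite Mix" unfolding Mix_def by simp
  have fB: "finite Bi" unfolding Bi_def by simp
  have BN: "Bi \<subseteq> {1..N}" unfolding Bi_def by auto
  have fewM: "card Mix < 3*n" using few unfolding Mix_def .
  have Npos: "0 < N" using num n1 by simp
  have B4: "N \<le> 4 * card Bi"
  proof -
    have notboth: "\<not> ((\<exists>a1\<in>{1..N}. \<forall>j\<in>{1..N}. Xv j a1 \<in> A) \<and> (\<exists>a2\<in>{1..N}. \<forall>j\<in>{1..N}. Xv j a2 \<notin> A))"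
    proof
      assume "(\<exists>a1\<in>{1..N}. \<forall>j\<in>{1..N}. Xv j a1 \<in> A) \<and> (\<exists>a2\<in>{1..N}. \<forall>j\<in>{1..N}. Xv j a2 \<notin> A)"
      then obtain a1 a2 where a12: "a1 \<in> {1..N}" "\<forall>j\<in>{1..N}. Xv j a1 \<in> A" "a2 \<in> {1..N}" "\<forall>j\<in>{1..N}. Xv j a2 \<notin> A"
        by blast
      have "{1..N} \<subseteq> Mix"
      proof
        fix j assume j: "j \<in> {1..N}"
        then have "Xv j a1 \<in> A" "Xv j a2 \<notin> A" using a12 by auto
        then show "j \<in> Mix" unfolding Mix_def using j a12(1,3) by blast
      qed
      then have "card {1..N} \<le> card Mix" using card_mono[OF fM] by blast
      then have "N \<le> card Mix" by simp
      then show False using fewM num by simp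
    qed
    have img: "card ((\<lambda>(j,a). Xv j a) ` ({1..N} \<times> Bi)) \<le> N * card Bi"
      using card_image_le[of "{1..N} \<times> Bi" "\<lambda>(j,a). Xv j a"] fB by (simp add: card_cartesian_product)
    have fimg: "finite ((\<lambda>(j,a). Xv j a) ` ({1..N} \<times> Bi))" using fB by simp
    have "N * N \<le> N * (4 * card Bi)"
    proof (cases "\<forall>a\<in>{1..N}. \<exists>j\<in>{1..N}. Xv j a \<notin> A")
      case True
      have "A \<inter> XX N \<subseteq> (\<lambda>(j,a). Xv j a) ` ({1..N} \<times> Bi)"
      proof
        fix x assume x: "x \<in> A \<inter> XX N"
        then obtain j a where ja: "x = Xv j a" "j \<in> {1..N}" "a \<in> {1..N}" using XX_elim by blast
        then have "a \<in> Bi" using True x unfolding Bi_def by blast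
        then show "x \<in> (\<lambda>(j,a). Xv j a) ` ({1..N} \<times> Bi)" using ja img_mem by simp
      qed
      then have "card (A \<inter> XX N) \<le> N * card Bi" using card_mono[OF fimg] img by (meson le_trans)
      moreover have "N * (4 * card Bi) = 4 * (N * card Bi)" by simp
      ultimately show ?thesis using bnd by linarith
    next
      case False
      then have noA: "\<forall>a\<in>{1..N}. \<exists>j\<in>{1..N}. Xv j a \<in> A" using notboth by blast
      have "XX N - A \<subseteq> (\<lambda>(j,a). Xv j a) ` ({1..N} \<times> Bi)"
      proof
        fix x assume x: "x \<in> XX N - A"
        then obtain j a where ja: "x = Xv j a" "j \<in> {1..N}" "a \<in> {1..N}" using XX_elim by blast
        then have "a \<in> Bi" using noA x unfolding Bi_def by blast
        then show "x \<in> (\<lambda>(j,a). Xv j a) ` ({1..N} \<times> Bi)" using ja img_mem by simp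
      qed
      then have "card (XX N - A) \<le> N * card Bi" using card_mono[OF fimg] img by (meson le_trans)
      moreover have "N * (4 * card Bi) = 4 * (N * card Bi)" by simp
      ultimately show ?thesis using bnd by linarith
    qed
    then show ?thesis using Npos by simp
  qed
  have ex: "\<forall>a\<in>Bi. \<exists>t. 1 \<le> t \<and> t+1 \<le> N \<and> (Xv t a \<in> A) \<noteq> (Xv (t+1) a \<in> A)"
  proof
    fix a assume "a \<in> Bi"
    then obtain j1 j2 where "j1 \<in> {1..N}" "j2 \<in> {1..N}" "Xv j1 a \<in> A" "Xv j2 a \<notin> A" unfolding Bi_def by blast
    then show "\<exists>t. 1 \<le> t \<and> t+1 \<le> N \<and> (Xv t a \<in> A) \<noteq> (Xv (t+1) a \<in> A)"
      using change[where P="\<lambda>j. Xv j a \<in> A" and i=j1 and j=j2 and N=N] by simp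
  qed
  obtain tau where tau: "\<forall>a\<in>Bi. 1 \<le> tau a \<and> tau a + 1 \<le> N \<and> (Xv (tau a) a \<in> A) \<noteq> (Xv (tau a + 1) a \<in> A)"
    using bchoice[OF ex] by blast
  have pureA: "\<forall>b\<in>{1..N}. Xv j b \<in> A" if "j \<in> {1..N}" "j \<notin> Mix" "a \<in> {1..N}" "Xv j a \<in> A" for j a
    using that unfolding Mix_def by blast
  have pureB: "\<forall>b\<in>{1..N}. Xv j b \<notin> A" if "j \<in> {1..N}" "j \<notin> Mix" "a \<in> {1..N}" "Xv j a \<notin> A" for j a
    using that unfolding Mix_def by blast
  have cN: "card {1..N} = N" by simp
  show ?thesis
  proof (cases "\<exists>a\<in>Bi. tau a \<notin> Mix \<and> tau a + 1 \<notin> Mix")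
    case True
    then obtain a where a: "a \<in> Bi" "tau a \<notin> Mix" "tau a + 1 \<notin> Mix" by blast
    define t where "t = tau a"
    have t: "1 \<le> t" "t + 1 \<le> N" "(Xv t a \<in> A) \<noteq> (Xv (t+1) a \<in> A)" using tau a(1) unfolding t_def by auto
    have aN: "a \<in> {1..N}" using a BN by blast
    have tN: "t \<in> {1..N}" "t+1 \<in> {1..N}" using t by auto
    have tM: "t \<notin> Mix" "t+1 \<notin> Mix" using a unfolding t_def by auto
    show ?thesis
    proof (cases "Xv t a \<in> A")
      case True
      then have "Xv (t+1) a \<notin> A" using t by simp
      then have "\<forall>b\<in>{1..N}. Xv t b \<in> A \<and> Xv (t+1) b \<notin> A"
        using pureA[OF tN(1) tM(1) aN True] pureB[OF tN(2) tM(2) aN] by blast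
      then show ?thesis using H3[rule_format, OF t(1) t(2) order_refl _ AV] num cN by simp
    next
      case False
      then have "Xv (t+1) a \<in> A" using t by simp
      then have "\<forall>b\<in>{1..N}. Xv (t+1) b \<in> A \<and> Xv t b \<notin> A"
        using pureB[OF tN(1) tM(1) aN False] pureA[OF tN(2) tM(2) aN] by blast
      then show ?thesis using H3'[rule_format, OF t(1) t(2) order_refl _ AV] num cN by simp
    qed
  next
    case False
    then have allM: "\<forall>a\<in>Bi. tau a \<in> Mix \<or> tau a + 1 \<in> Mix" by blast
    define f where "f a = (tau a, Xv (tau a) a \<in> A)" for a
    define C where "C = (Mix \<union> (\<lambda>j. j - 1) ` Mix) \<times> (UNIV :: bool set)"
    have fC: "finite C" unfolding C_def using fM by simp
    have im: "f ` Bi \<subseteq> C"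
    proof
      fix x assume "x \<in> f ` Bi"
      then obtain a where a: "a \<in> Bi" "x = f a" by blast
      have "tau a \<in> Mix \<or> tau a + 1 \<in> Mix" using allM a by blast
      then have "tau a \<in> Mix \<union> (\<lambda>j. j - 1) ` Mix" by (metis UnI1 UnI2 add_diff_cancel_right' image_eqI)
      then show "x \<in> C" unfolding C_def a f_def by simp
    qed
    have "card (Mix \<union> (\<lambda>j. j - 1) ` Mix) \<le> card Mix + card ((\<lambda>j. j - 1) ` Mix)" by (rule card_Un_le)
    moreover have "card ((\<lambda>j. j - 1) ` Mix) \<le> card Mix" by (rule card_image_le[OF fM])
    moreover have "card C = card (Mix \<union> (\<lambda>j. j - 1) ` Mix) * 2" unfolding C_def
      by (simp add: card_cartesian_product)
    ultimately have "card C \<le> 12 * n" using fewM by simp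
    then have "card C * n \<le> 12 * n * n" by simp
    also have "\<dots> < card Bi" using B4 num by simp
    finally have lt: "card C * n < card Bi" .
    obtain td where td: "td \<in> C" "n < card {a\<in>Bi. f a = td}" using pigeon[OF fB fC im lt] by blast
    obtain t d where tdd: "td = (t,d)" by (cases td)
    define S where "S = {a\<in>Bi. f a = (t,d)}"
    have cS: "n + 1 \<le> card S" using td tdd unfolding S_def by simp
    have SN: "S \<subseteq> {1..N}" using BN unfolding S_def by blast
    have "S \<noteq> {}" using cS by auto
    then obtain a0 where a0: "a0 \<in> S" by blast
    have t: "1 \<le> t" "t + 1 \<le> N" using a0 tau unfolding S_def f_def by auto
    have Sprop: "\<forall>a\<in>S. (Xv t a \<in> A) = d \<and> (Xv t a \<in> A) \<noteq> (Xv (t+1) a \<in> A)"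
      using tau unfolding S_def f_def by auto
    show ?thesis
    proof (cases d)
      case True
      then have "\<forall>a\<in>S. Xv t a \<in> A \<and> Xv (t+1) a \<notin> A" using Sprop by auto
      then show ?thesis using H3[rule_format, OF t(1) t(2) SN cS AV] by simp
    next
      case False
      then have "\<forall>a\<in>S. Xv (t+1) a \<in> A \<and> Xv t a \<notin> A" using Sprop by auto
      then show ?thesis using H3'[rule_format, OF t(1) t(2) SN cS AV] by simp
    qed
  qed
qed


lemma generic_rw:
  fixes G :: "qv graph"
  assumes finV: "finite (fst G)" and XXV: "XX N \<subseteq> fst G" and rest: "card (fst G - XX N) \<le> 2*N+2"
    and H1: "\<forall>j j' a b. j + 2 \<le> j' \<longrightarrow> {Xv j a, Xv j' b} \<notin> snd G"
    and H2: "\<forall>A j a b. 1 \<le> j \<longrightarrow> j \<le> N \<longrightarrow> a \<in> {1..N} \<longrightarrow> b \<in> {1..N} \<longrightarrow> Xv j a \<in> A \<longrightarrow> Xv j b \<notin> A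
       \<longrightarrow> (\<exists>r c. r \<in> A \<and> c \<notin> A \<and> {r,c} \<in> snd G \<and> r \<in> LV N j \<and> c \<in> LV N j)"
    and H3: "\<forall>A t S. 1 \<le> t \<longrightarrow> t+1 \<le> N \<longrightarrow> S \<subseteq> {1..N} \<longrightarrow> n+1 \<le> card S \<longrightarrow> A \<subseteq> fst G \<longrightarrow>
        (\<forall>a\<in>S. Xv t a \<in> A \<and> Xv (t+1) a \<notin> A) \<longrightarrow> n \<le> cutrank G A"
    and H3': "\<forall>A t S. 1 \<le> t \<longrightarrow> t+1 \<le> N \<longrightarrow> S \<subseteq> {1..N} \<longrightarrow> n+1 \<le> card S \<longrightarrow> A \<subseteq> fst G \<longrightarrow>
        (\<forall>a\<in>S. Xv (t+1) a \<in> A \<and> Xv t a \<notin> A) \<longrightarrow> n \<le> cutrank G A"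
    and num: "25 \<le> N" "3*n \<le> N" "48*n*n < N" "n + 1 \<le> N"
  shows "n \<le> rankwidth G"
proof (cases "n = 0")
  case True then show ?thesis by simp
next
  case False
  then have n1: "1 \<le> n" by simp
  have "card (XX N) \<le> card (fst G)" using card_mono[OF finV XXV] .
  moreover have "25*25 \<le> N*N" using mult_le_mono[OF num(1) num(1)] .
  then have "2 \<le> card (XX N)" unfolding card_XX by simp
  ultimately have two: "2 \<le> card (fst G)" by simp
  show ?thesis
  proof (rule rw_lb[OF finV two])
    fix A assume AV: "A \<subseteq> fst G" and b1: "card (fst G) \<le> 3 * card A" and b2: "3 * card A \<le> 2 * card (fst G)"
    have bnd: "N*N \<le> 4*card (A \<inter> XX N)" "N*N \<le> 4*card (XX N - A)"
      using bal_bounds[OF finV XXV rest num(1) AV b1 b2] by auto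
    show "n \<le> cutrank G A"
    proof (cases "3*n \<le> card {j\<in>{1..N}. (\<exists>a\<in>{1..N}. Xv j a \<in> A) \<and> (\<exists>b\<in>{1..N}. Xv j b \<notin> A)}")
      case True
      show ?thesis by (rule case_mix[OF finV XXV AV n1 H1 H2 True])
    next
      case False
      then have few: "card {j\<in>{1..N}. (\<exists>a\<in>{1..N}. Xv j a \<in> A) \<and> (\<exists>b\<in>{1..N}. Xv j b \<notin> A)} < 3*n" by simp
      show ?thesis by (rule case_few[OF AV n1 H3 H3' num(2-4) bnd few])
    qed
  qed
qed


lemma Xv_pair_eq: "{Xv i a, Xv j b} = {Xv p x, Xv q y} \<longleftrightarrow>
   (i = p \<and> a = x \<and> j = q \<and> b = y) \<or> (i = q \<and> a = y \<and> j = p \<and> b = x)"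
  by (auto simp: doubleton_eq_iff)

lemma L_M: "{Xv i a, Xv j b} \<in> snd (Mg m l (l+1)) \<longleftrightarrow>
    a = b \<and> a \<in> {1..m} \<and> ((i = l \<and> j = l+1) \<or> (i = l+1 \<and> j = l))"
  unfolding Mg_def by (auto simp: Xv_pair_eq)

lemma L_H: "{Xv i a, Xv j b} \<in> snd (Hg m l (l+1)) \<longleftrightarrow>
    a \<in> {1..m} \<and> b \<in> {1..m} \<and> ((i = l \<and> j = l+1 \<and> a \<le> b) \<or> (i = l+1 \<and> j = l \<and> b \<le> a))"
  unfolding Hg_def by (auto simp: Xv_pair_eq)

lemma L_A: "{Xv i a, Xv j b} \<in> snd (Ag m l (l+1)) \<longleftrightarrow>
    a \<in> {1..m} \<and> b \<in> {1..m} \<and> a \<noteq> b \<and> ((i = l \<and> j = l+1) \<or> (i = l+1 \<and> j = l))"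
  unfolding Ag_def by (auto simp: Xv_pair_eq)

lemma L_K: "{Xv i a, Xv j b} \<in> snd (clique ({Yv l} \<union> Xs m l)) \<longleftrightarrow>
    i = l \<and> j = l \<and> a \<noteq> b \<and> a \<in> {1..m} \<and> b \<in> {1..m}"
proof
  assume "{Xv i a, Xv j b} \<in> snd (clique ({Yv l} \<union> Xs m l))"
  then show "i = l \<and> j = l \<and> a \<noteq> b \<and> a \<in> {1..m} \<and> b \<in> {1..m}"
    unfolding clique_def Xs_def by (auto simp: doubleton_eq_iff)
next
  assume h: "i = l \<and> j = l \<and> a \<noteq> b \<and> a \<in> {1..m} \<and> b \<in> {1..m}"
  then have "Xv i a \<in> {Yv l} \<union> Xs m l" "Xv j b \<in> {Yv l} \<union> Xs m l" "Xv i a \<noteq> Xv j b"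
    unfolding Xs_def by auto
  then show "{Xv i a, Xv j b} \<in> snd (clique ({Yv l} \<union> Xs m l))"
    unfolding clique_def snd_conv by blast
qed

lemma L_Z: "{Xv i a, Xv j b} \<notin> snd (cbip {Zv l} S)"
  unfolding cbip_def by (auto simp: doubleton_eq_iff)


lemma Xs_XX: "i \<in> {1..N} \<Longrightarrow> Xs N i \<subseteq> XX N"
  unfolding Xs_def XX_def by auto

lemma Xv_Xs: "a \<in> {1..N} \<Longrightarrow> Xv i a \<in> Xs N i"
  unfolding Xs_def by auto

lemma V_helper:
  assumes "V \<subseteq> XX N \<union> Yv ` {1..N} \<union> Zv ` {1..N}"
  shows "finite V \<and> card (V - XX N) \<le> 2*N+2"
proof -
  have "finite (XX N \<union> Yv ` {1..N} \<union> Zv ` {1..N})" using finite_XX by simp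
  then have f: "finite V" using assms finite_subset by blast
  have "V - XX N \<subseteq> Yv ` {1..N} \<union> Zv ` {1..N}" using assms by blast
  then have "card (V - XX N) \<le> card (Yv ` {1..N} \<union> Zv ` {1..N})" by (intro card_mono) auto
  also have "\<dots> \<le> card (Yv ` {1..N}) + card (Zv ` {1..N})" by (rule card_Un_le)
  also have "\<dots> \<le> N + N" using card_image_le[of "{1..N}" Yv] card_image_le[of "{1..N}" Zv] by simp
  finally show ?thesis using f by simp
qed

lemma H2_clique:
  assumes cl: "\<forall>i a b. 1 \<le> i \<longrightarrow> i \<le> N \<longrightarrow> a \<in> {1..N} \<longrightarrow> b \<in> {1..N} \<longrightarrow> a \<noteq> b \<longrightarrow> {Xv i a, Xv i b} \<in> snd G"
  shows "\<forall>A j a b. 1 \<le> j \<longrightarrow> j \<le> N \<longrightarrow> a \<in> {1..N} \<longrightarrow> b \<in> {1..N} \<longrightarrow> Xv j a \<in> A \<longrightarrow> Xv j b \<notin> A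
       \<longrightarrow> (\<exists>r c. r \<in> A \<and> c \<notin> A \<and> {r,c} \<in> snd G \<and> r \<in> LV N j \<and> c \<in> LV N j)"
proof (intro allI impI)
  fix A j a b
  assume h: "1 \<le> j" "j \<le> N" "a \<in> {1..N}" "b \<in> {1..N}" "Xv j a \<in> A" "Xv j b \<notin> A"
  then have "a \<noteq> b" by auto
  then have "{Xv j a, Xv j b} \<in> snd G" using cl h by blast
  moreover have "Xv j a \<in> LV N j" "Xv j b \<in> LV N j" using h unfolding LV_def by blast+
  ultimately show "\<exists>r c. r \<in> A \<and> c \<notin> A \<and> {r,c} \<in> snd G \<and> r \<in> LV N j \<and> c \<in> LV N j"
    using h by blast
qed

lemma H3_gen:
  fixes G :: "qv graph"
  assumes finV: "finite (fst G)" and XXV: "XX N \<subseteq> fst G" and AV: "A \<subseteq> fst G"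
    and SN: "S \<subseteq> {1..N}" and t: "t \<in> {1..N}" "t' \<in> {1..N}"
    and adj: "\<forall>a\<in>S. \<forall>b\<in>S. ({Xv t a, Xv t' b} \<in> snd G \<longleftrightarrow> P a b)"
    and pat: "\<forall>J. J \<subseteq> S \<longrightarrow> J \<noteq> {} \<longrightarrow> (\<exists>j\<in>S. odd (card {i\<in>J. P i j}))"
    and inA: "\<forall>a\<in>S. Xv t a \<in> A \<and> Xv t' a \<notin> A"
  shows "card S \<le> cutrank G A"
proof (rule rank_lb[where r = "Xv t" and c = "Xv t'" and P = P])
  show "finite A" using finV AV finite_subset by blast
  show "finite S" using SN finite_subset by blast
  show "\<forall>i\<in>S. Xv t i \<in> A" using inA by blast
  show "\<forall>j\<in>S. Xv t' j \<in> fst G - A"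
  proof
    fix j assume "j \<in> S"
    then have "Xv t' j \<in> XX N" "Xv t' j \<notin> A" using SN t inA XX_mem by auto
    then show "Xv t' j \<in> fst G - A" using XXV by blast
  qed
  show "inj_on (Xv t) S" by (auto simp: inj_on_def)
  show "\<forall>i\<in>S. \<forall>j\<in>S. ({Xv t i, Xv t' j} \<in> snd G \<longleftrightarrow> P i j)" using adj .
  show "\<forall>J. J \<subseteq> S \<longrightarrow> J \<noteq> {} \<longrightarrow> (\<exists>j\<in>S. odd (card {i\<in>J. P i j}))" using pat .
qed

lemma even_sub:
  assumes "finite S" "n + 1 \<le> card S"
  shows "\<exists>S'. S' \<subseteq> S \<and> even (card S') \<and> n \<le> card S'"
proof (cases "even (card S)")
  case True then show ?thesis using assms by (intro exI[of _ S]) simp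
next
  case False
  obtain x where "x \<in> S" using assms by fastforce
  then have "card (S - {x}) = card S - 1" using assms by simp
  moreover have "card S \<ge> 1" using assms by simp
  ultimately show ?thesis using False assms
    by (intro exI[of _ "S - {x}"]) auto
qed


lemma E_MKK: "{Xv i a, Xv j b} \<in> snd (Q_MKK k m) \<longleftrightarrow>
   (\<exists>l\<in>{1..k-1}. a = b \<and> a \<in> {1..m} \<and> ((i = l \<and> j = l+1) \<or> (i = l+1 \<and> j = l))) \<or>
   (\<exists>l\<in>{1..k}. i = l \<and> j = l \<and> a \<noteq> b \<and> a \<in> {1..m} \<and> b \<in> {1..m})"
  unfolding Q_MKK_def gunion_def gUnion_def by (simp only: snd_conv Un_iff UN_iff L_M L_K)

lemma V_MKK: "fst (Q_MKK k m) = (\<Union>i\<in>{1..k-1}. Xs m i \<union> Xs m (i+1)) \<union> (\<Union>i\<in>{1..k}. {Yv i} \<union> Xs m i)"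
  unfolding Q_MKK_def gunion_def gUnion_def Mg_def clique_def by simp

lemma MKK_rw:
  assumes num: "25 \<le> N" "3*n \<le> N" "48*n*n < N" "n + 1 \<le> N"
  shows "n \<le> rankwidth (Q_MKK N N)"
proof -
  let ?G = "Q_MKK N N"
  have sub1: "XX N \<subseteq> fst ?G"
  proof
    fix x assume "x \<in> XX N"
    then obtain j a where ja: "x = Xv j a" "j \<in> {1..N}" "a \<in> {1..N}" using XX_elim by blast
    then have "x \<in> {Yv j} \<union> Xs N j" using Xv_Xs by simp
    then show "x \<in> fst ?G" unfolding V_MKK using ja by blast
  qed
  have sub2: "fst ?G \<subseteq> XX N \<union> Yv ` {1..N} \<union> Zv ` {1..N}"
  proof
    fix x assume "x \<in> fst ?G"
    then consider i where "i \<in> {1..N-1}" "x \<in> Xs N i \<union> Xs N (i+1)" | i where "i \<in> {1..N}" "x \<in> {Yv i} \<union> Xs N i"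
      unfolding V_MKK by blast
    then show "x \<in> XX N \<union> Yv ` {1..N} \<union> Zv ` {1..N}"
    proof cases
      case 1
      then have "i \<in> {1..N}" "i+1 \<in> {1..N}" by auto
      then show ?thesis using 1 Xs_XX by blast
    next
      case 2
      then show ?thesis using Xs_XX by blast
    qed
  qed
  have VH: "finite (fst ?G) \<and> card (fst ?G - XX N) \<le> 2*N+2" by (rule V_helper[OF sub2])
  have H1: "\<forall>j j' a b. j + 2 \<le> j' \<longrightarrow> {Xv j a, Xv j' b} \<notin> snd ?G"
    unfolding E_MKK by auto
  have cl: "\<forall>i a b. 1 \<le> i \<longrightarrow> i \<le> N \<longrightarrow> a \<in> {1..N} \<longrightarrow> b \<in> {1..N} \<longrightarrow> a \<noteq> b \<longrightarrow> {Xv i a, Xv i b} \<in> snd ?G"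
    unfolding E_MKK by auto
  have cross: "{Xv t a, Xv (t+1) b} \<in> snd ?G \<longleftrightarrow> a = b" "{Xv (t+1) a, Xv t b} \<in> snd ?G \<longleftrightarrow> a = b"
    if "1 \<le> t" "t + 1 \<le> N" "a \<in> {1..N}" "b \<in> {1..N}" for t a b
    using that unfolding E_MKK by auto
  have H3: "\<forall>A t S. 1 \<le> t \<longrightarrow> t+1 \<le> N \<longrightarrow> S \<subseteq> {1..N} \<longrightarrow> n+1 \<le> card S \<longrightarrow> A \<subseteq> fst ?G \<longrightarrow>
        (\<forall>a\<in>S. Xv t a \<in> A \<and> Xv (t+1) a \<notin> A) \<longrightarrow> n \<le> cutrank ?G A"
  proof (intro allI impI)
    fix A t S assume h: "1 \<le> t" "t+1 \<le> N" "S \<subseteq> {1..N}" "n+1 \<le> card S" "A \<subseteq> fst ?G"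
      "\<forall>a\<in>S. Xv t a \<in> A \<and> Xv (t+1) a \<notin> A"
    have adj: "\<forall>a\<in>S. \<forall>b\<in>S. ({Xv t a, Xv (t+1) b} \<in> snd ?G \<longleftrightarrow> a = b)" using cross(1) h by blast
    have "card S \<le> cutrank ?G A"
      by (rule H3_gen[OF _ sub1 h(5) h(3) _ _ adj pat_eq h(6)]) (use VH h in auto)
    then show "n \<le> cutrank ?G A" using h by simp
  qed
  have H3': "\<forall>A t S. 1 \<le> t \<longrightarrow> t+1 \<le> N \<longrightarrow> S \<subseteq> {1..N} \<longrightarrow> n+1 \<le> card S \<longrightarrow> A \<subseteq> fst ?G \<longrightarrow>
        (\<forall>a\<in>S. Xv (t+1) a \<in> A \<and> Xv t a \<notin> A) \<longrightarrow> n \<le> cutrank ?G A"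
  proof (intro allI impI)
    fix A t S assume h: "1 \<le> t" "t+1 \<le> N" "S \<subseteq> {1..N}" "n+1 \<le> card S" "A \<subseteq> fst ?G"
      "\<forall>a\<in>S. Xv (t+1) a \<in> A \<and> Xv t a \<notin> A"
    have adj: "\<forall>a\<in>S. \<forall>b\<in>S. ({Xv (t+1) a, Xv t b} \<in> snd ?G \<longleftrightarrow> a = b)" using cross(2) h by blast
    have "card S \<le> cutrank ?G A"
      by (rule H3_gen[OF _ sub1 h(5) h(3) _ _ adj pat_eq h(6)]) (use VH h in auto)
    then show "n \<le> cutrank ?G A" using h by simp
  qed
  show ?thesis
    by (rule generic_rw[OF _ sub1 _ H1 H2_clique[OF cl] H3 H3' num]) (use VH in auto)
qed


lemma E_HKK: "{Xv i a, Xv j b} \<in> snd (Q_HKK k m) \<longleftrightarrow>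
   (\<exists>l\<in>{1..k-1}. a \<in> {1..m} \<and> b \<in> {1..m} \<and> ((i = l \<and> j = l+1 \<and> a \<le> b) \<or> (i = l+1 \<and> j = l \<and> b \<le> a))) \<or>
   (\<exists>l\<in>{1..k}. i = l \<and> j = l \<and> a \<noteq> b \<and> a \<in> {1..m} \<and> b \<in> {1..m})"
  unfolding Q_HKK_def gunion_def gUnion_def by (simp only: snd_conv Un_iff UN_iff L_H L_K)

lemma V_HKK: "fst (Q_HKK k m) = (\<Union>i\<in>{1..k-1}. Xs m i \<union> Xs m (i+1)) \<union> (\<Union>i\<in>{1..k}. {Yv i} \<union> Xs m i)"
  unfolding Q_HKK_def gunion_def gUnion_def Hg_def clique_def by simp

lemma HKK_rw:
  assumes num: "25 \<le> N" "3*n \<le> N" "48*n*n < N" "n + 1 \<le> N"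
  shows "n \<le> rankwidth (Q_HKK N N)"
proof -
  let ?G = "Q_HKK N N"
  have sub1: "XX N \<subseteq> fst ?G"
  proof
    fix x assume "x \<in> XX N"
    then obtain j a where ja: "x = Xv j a" "j \<in> {1..N}" "a \<in> {1..N}" using XX_elim by blast
    then have "x \<in> {Yv j} \<union> Xs N j" using Xv_Xs by simp
    then show "x \<in> fst ?G" unfolding V_HKK using ja by blast
  qed
  have sub2: "fst ?G \<subseteq> XX N \<union> Yv ` {1..N} \<union> Zv ` {1..N}"
  proof
    fix x assume "x \<in> fst ?G"
    then consider i where "i \<in> {1..N-1}" "x \<in> Xs N i \<union> Xs N (i+1)" | i where "i \<in> {1..N}" "x \<in> {Yv i} \<union> Xs N i"
      unfolding V_HKK by blast
    then show "x \<in> XX N \<union> Yv ` {1..N} \<union> Zv ` {1..N}"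
    proof cases
      case 1
      then have "i \<in> {1..N}" "i+1 \<in> {1..N}" by auto
      then show ?thesis using 1 Xs_XX by blast
    next
      case 2
      then show ?thesis using Xs_XX by blast
    qed
  qed
  have VH: "finite (fst ?G) \<and> card (fst ?G - XX N) \<le> 2*N+2" by (rule V_helper[OF sub2])
  have H1: "\<forall>j j' a b. j + 2 \<le> j' \<longrightarrow> {Xv j a, Xv j' b} \<notin> snd ?G"
    unfolding E_HKK by auto
  have cl: "\<forall>i a b. 1 \<le> i \<longrightarrow> i \<le> N \<longrightarrow> a \<in> {1..N} \<longrightarrow> b \<in> {1..N} \<longrightarrow> a \<noteq> b \<longrightarrow> {Xv i a, Xv i b} \<in> snd ?G"
    unfolding E_HKK by auto
  have cross: "{Xv t a, Xv (t+1) b} \<in> snd ?G \<longleftrightarrow> a \<le> b" "{Xv (t+1) a, Xv t b} \<in> snd ?G \<longleftrightarrow> b \<le> a"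
    if "1 \<le> t" "t + 1 \<le> N" "a \<in> {1..N}" "b \<in> {1..N}" for t a b
    using that unfolding E_HKK by auto
  have H3: "\<forall>A t S. 1 \<le> t \<longrightarrow> t+1 \<le> N \<longrightarrow> S \<subseteq> {1..N} \<longrightarrow> n+1 \<le> card S \<longrightarrow> A \<subseteq> fst ?G \<longrightarrow>
        (\<forall>a\<in>S. Xv t a \<in> A \<and> Xv (t+1) a \<notin> A) \<longrightarrow> n \<le> cutrank ?G A"
  proof (intro allI impI)
    fix A t S assume h: "1 \<le> t" "t+1 \<le> N" "S \<subseteq> {1..N}" "n+1 \<le> card S" "A \<subseteq> fst ?G"
      "\<forall>a\<in>S. Xv t a \<in> A \<and> Xv (t+1) a \<notin> A"
    have adj: "\<forall>a\<in>S. \<forall>b\<in>S. ({Xv t a, Xv (t+1) b} \<in> snd ?G \<longleftrightarrow> a \<le> b)" using cross(1) h by blast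
    have fS: "finite S" using h(3) finite_subset by blast
    have "card S \<le> cutrank ?G A"
      by (rule H3_gen[OF _ sub1 h(5) h(3) _ _ adj pat_le[OF fS] h(6)]) (use VH h in auto)
    then show "n \<le> cutrank ?G A" using h by simp
  qed
  have H3': "\<forall>A t S. 1 \<le> t \<longrightarrow> t+1 \<le> N \<longrightarrow> S \<subseteq> {1..N} \<longrightarrow> n+1 \<le> card S \<longrightarrow> A \<subseteq> fst ?G \<longrightarrow>
        (\<forall>a\<in>S. Xv (t+1) a \<in> A \<and> Xv t a \<notin> A) \<longrightarrow> n \<le> cutrank ?G A"
  proof (intro allI impI)
    fix A t S assume h: "1 \<le> t" "t+1 \<le> N" "S \<subseteq> {1..N}" "n+1 \<le> card S" "A \<subseteq> fst ?G"
      "\<forall>a\<in>S. Xv (t+1) a \<in> A \<and> Xv t a \<notin> A"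
    have adj: "\<forall>a\<in>S. \<forall>b\<in>S. ({Xv (t+1) a, Xv t b} \<in> snd ?G \<longleftrightarrow> b \<le> a)" using cross(2) h by blast
    have fS: "finite S" using h(3) finite_subset by blast
    have "card S \<le> cutrank ?G A"
      by (rule H3_gen[OF _ sub1 h(5) h(3) _ _ adj pat_ge[OF fS] h(6)]) (use VH h in auto)
    then show "n \<le> cutrank ?G A" using h by simp
  qed
  show ?thesis
    by (rule generic_rw[OF _ sub1 _ H1 H2_clique[OF cl] H3 H3' num]) (use VH in auto)
qed


lemma E_AKK: "{Xv i a, Xv j b} \<in> snd (Q_AKK k m) \<longleftrightarrow>
   (\<exists>l\<in>{1..k-1}. a \<in> {1..m} \<and> b \<in> {1..m} \<and> a \<noteq> b \<and> ((i = l \<and> j = l+1) \<or> (i = l+1 \<and> j = l))) \<or>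
   (\<exists>l\<in>{1..k}. i = l \<and> j = l \<and> a \<noteq> b \<and> a \<in> {1..m} \<and> b \<in> {1..m})"
  unfolding Q_AKK_def gunion_def gUnion_def by (simp only: snd_conv Un_iff UN_iff L_A L_K L_Z simp_thms bex_simps) blast

lemma V_AKK: "fst (Q_AKK k m) = (\<Union>i\<in>{1..k-1}. Xs m i \<union> Xs m (i+1)) \<union> (\<Union>i\<in>{1..k}. {Yv i} \<union> Xs m i)
     \<union> (\<Union>i\<in>{1..k-1}. {Zv i} \<union> (Xs m i \<union> Xs m (i+1)))"
  unfolding Q_AKK_def gunion_def gUnion_def Ag_def clique_def cbip_def by simp

lemma AKK_rw:
  assumes num: "25 \<le> N" "3*n \<le> N" "48*n*n < N" "n + 1 \<le> N"
  shows "n \<le> rankwidth (Q_AKK N N)"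
proof -
  let ?G = "Q_AKK N N"
  have sub1: "XX N \<subseteq> fst ?G"
  proof
    fix x assume "x \<in> XX N"
    then obtain j a where ja: "x = Xv j a" "j \<in> {1..N}" "a \<in> {1..N}" using XX_elim by blast
    then have "x \<in> {Yv j} \<union> Xs N j" using Xv_Xs by simp
    then show "x \<in> fst ?G" unfolding V_AKK using ja by blast
  qed
  have sub2: "fst ?G \<subseteq> XX N \<union> Yv ` {1..N} \<union> Zv ` {1..N}"
  proof
    fix x assume "x \<in> fst ?G"
    then consider i where "i \<in> {1..N-1}" "x \<in> Xs N i \<union> Xs N (i+1)" | i where "i \<in> {1..N}" "x \<in> {Yv i} \<union> Xs N i"
      | i where "i \<in> {1..N-1}" "x = Zv i"
      unfolding V_AKK by blast
    then show "x \<in> XX N \<union> Yv ` {1..N} \<union> Zv ` {1..N}"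
    proof cases
      case 1
      then have "i \<in> {1..N}" "i+1 \<in> {1..N}" by auto
      then show ?thesis using 1 Xs_XX by blast
    next
      case 2
      then show ?thesis using Xs_XX by blast
    next
      case 3
      then show ?thesis by auto
    qed
  qed
  have VH: "finite (fst ?G) \<and> card (fst ?G - XX N) \<le> 2*N+2" by (rule V_helper[OF sub2])
  have H1: "\<forall>j j' a b. j + 2 \<le> j' \<longrightarrow> {Xv j a, Xv j' b} \<notin> snd ?G"
    unfolding E_AKK by auto
  have cl: "\<forall>i a b. 1 \<le> i \<longrightarrow> i \<le> N \<longrightarrow> a \<in> {1..N} \<longrightarrow> b \<in> {1..N} \<longrightarrow> a \<noteq> b \<longrightarrow> {Xv i a, Xv i b} \<in> snd ?G"
    unfolding E_AKK by auto
  have cross: "{Xv t a, Xv (t+1) b} \<in> snd ?G \<longleftrightarrow> a \<noteq> b" "{Xv (t+1) a, Xv t b} \<in> snd ?G \<longleftrightarrow> a \<noteq> b"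
    if "1 \<le> t" "t + 1 \<le> N" "a \<in> {1..N}" "b \<in> {1..N}" for t a b
    using that unfolding E_AKK by auto
  have H3: "\<forall>A t S. 1 \<le> t \<longrightarrow> t+1 \<le> N \<longrightarrow> S \<subseteq> {1..N} \<longrightarrow> n+1 \<le> card S \<longrightarrow> A \<subseteq> fst ?G \<longrightarrow>
        (\<forall>a\<in>S. Xv t a \<in> A \<and> Xv (t+1) a \<notin> A) \<longrightarrow> n \<le> cutrank ?G A"
  proof (intro allI impI)
    fix A t S assume h: "1 \<le> t" "t+1 \<le> N" "S \<subseteq> {1..N}" "n+1 \<le> card S" "A \<subseteq> fst ?G"
      "\<forall>a\<in>S. Xv t a \<in> A \<and> Xv (t+1) a \<notin> A"
    have fS: "finite S" using h(3) finite_subset by blast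
    obtain S' where S': "S' \<subseteq> S" "even (card S')" "n \<le> card S'" using even_sub[OF fS h(4)] by blast
    have fS': "finite S'" using S'(1) fS finite_subset by blast
    have adj: "\<forall>a\<in>S'. \<forall>b\<in>S'. ({Xv t a, Xv (t+1) b} \<in> snd ?G \<longleftrightarrow> a \<noteq> b)" using cross(1) h S'(1) by blast
    have "card S' \<le> cutrank ?G A"
      by (rule H3_gen[OF _ sub1 h(5) _ _ _ adj pat_ne[OF fS' S'(2)]]) (use VH h S'(1) in auto)
    then show "n \<le> cutrank ?G A" using S' by simp
  qed
  have H3': "\<forall>A t S. 1 \<le> t \<longrightarrow> t+1 \<le> N \<longrightarrow> S \<subseteq> {1..N} \<longrightarrow> n+1 \<le> card S \<longrightarrow> A \<subseteq> fst ?G \<longrightarrow>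
        (\<forall>a\<in>S. Xv (t+1) a \<in> A \<and> Xv t a \<notin> A) \<longrightarrow> n \<le> cutrank ?G A"
  proof (intro allI impI)
    fix A t S assume h: "1 \<le> t" "t+1 \<le> N" "S \<subseteq> {1..N}" "n+1 \<le> card S" "A \<subseteq> fst ?G"
      "\<forall>a\<in>S. Xv (t+1) a \<in> A \<and> Xv t a \<notin> A"
    have fS: "finite S" using h(3) finite_subset by blast
    obtain S' where S': "S' \<subseteq> S" "even (card S')" "n \<le> card S'" using even_sub[OF fS h(4)] by blast
    have fS': "finite S'" using S'(1) fS finite_subset by blast
    have adj: "\<forall>a\<in>S'. \<forall>b\<in>S'. ({Xv (t+1) a, Xv t b} \<in> snd ?G \<longleftrightarrow> a \<noteq> b)" using cross(2) h S'(1) by blast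
    have "card S' \<le> cutrank ?G A"
      by (rule H3_gen[OF _ sub1 h(5) _ _ _ adj pat_ne[OF fS' S'(2)]]) (use VH h S'(1) in auto)
    then show "n \<le> cutrank ?G A" using S' by simp
  qed
  show ?thesis
    by (rule generic_rw[OF _ sub1 _ H1 H2_clique[OF cl] H3 H3' num]) (use VH in auto)
qed


lemma E_MKI: "{Xv i a, Xv j b} \<in> snd (Q_MKI k m) \<longleftrightarrow>
   (\<exists>l\<in>{1..k-1}. a = b \<and> a \<in> {1..m} \<and> ((i = l \<and> j = l+1) \<or> (i = l+1 \<and> j = l))) \<or>
   (\<exists>l\<in>{1..(k+1) div 2}. i = 2*l-1 \<and> j = 2*l-1 \<and> a \<noteq> b \<and> a \<in> {1..m} \<and> b \<in> {1..m})"
  unfolding Q_MKI_def gunion_def gUnion_def by (simp only: snd_conv Un_iff UN_iff L_M L_K)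

lemma V_MKI: "fst (Q_MKI k m) = (\<Union>i\<in>{1..k-1}. Xs m i \<union> Xs m (i+1)) \<union> (\<Union>i\<in>{1..(k+1) div 2}. {Yv (2*i-1)} \<union> Xs m (2*i-1))"
  unfolding Q_MKI_def gunion_def gUnion_def Mg_def clique_def by simp

lemma MKI_rw:
  assumes num: "25 \<le> N" "3*n \<le> N" "48*n*n < N" "n + 1 \<le> N"
  shows "n \<le> rankwidth (Q_MKI N N)"
proof -
  let ?G = "Q_MKI N N"
  have sub1: "XX N \<subseteq> fst ?G"
  proof
    fix x assume "x \<in> XX N"
    then obtain j a where ja: "x = Xv j a" "j \<in> {1..N}" "a \<in> {1..N}" using XX_elim by blast
    show "x \<in> fst ?G"
    proof (cases "j + 1 \<le> N")
      case True
      then have "j \<in> {1..N-1}" using ja by auto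
      moreover have "x \<in> Xs N j \<union> Xs N (j+1)" using ja Xv_Xs by simp
      ultimately show ?thesis unfolding V_MKI by blast
    next
      case False
      then have "j = N" using ja by auto
      then have "N - 1 \<in> {1..N-1}" "x \<in> Xs N (N-1) \<union> Xs N (N-1+1)" using ja Xv_Xs num(1) by auto
      then show ?thesis unfolding V_MKI by blast
    qed
  qed
  have sub2: "fst ?G \<subseteq> XX N \<union> Yv ` {1..N} \<union> Zv ` {1..N}"
  proof
    fix x assume "x \<in> fst ?G"
    then consider i where "i \<in> {1..N-1}" "x \<in> Xs N i \<union> Xs N (i+1)"
      | i where "i \<in> {1..(N+1) div 2}" "x \<in> {Yv (2*i-1)} \<union> Xs N (2*i-1)"
      unfolding V_MKI by blast
    then show "x \<in> XX N \<union> Yv ` {1..N} \<union> Zv ` {1..N}"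
    proof cases
      case 1
      then have "i \<in> {1..N}" "i+1 \<in> {1..N}" by auto
      then show ?thesis using 1 Xs_XX by blast
    next
      case 2
      then have "2*i-1 \<in> {1..N}" by auto
      then show ?thesis using 2 Xs_XX by blast
    qed
  qed
  have VH: "finite (fst ?G) \<and> card (fst ?G - XX N) \<le> 2*N+2" by (rule V_helper[OF sub2])
  have H1: "\<forall>j j' a b. j + 2 \<le> j' \<longrightarrow> {Xv j a, Xv j' b} \<notin> snd ?G"
    unfolding E_MKI by auto
  have clq: "{Xv i a, Xv i b} \<in> snd ?G" if "odd i" "1 \<le> i" "i \<le> N" "a \<in> {1..N}" "b \<in> {1..N}" "a \<noteq> b" for i a b
  proof -
    have "2 * ((i+1) div 2) - 1 = i" "(i+1) div 2 \<in> {1..(N+1) div 2}" using that by (auto elim!: oddE)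
    then show ?thesis unfolding E_MKI using that by (intro disjI2 bexI[of _ "(i+1) div 2"]) auto
  qed
  have mat: "{Xv t a, Xv (t+1) a} \<in> snd ?G" "{Xv (t+1) a, Xv t a} \<in> snd ?G"
    if "1 \<le> t" "t + 1 \<le> N" "a \<in> {1..N}" for t a
    using that unfolding E_MKI by auto
  have H2: "\<forall>A j a b. 1 \<le> j \<longrightarrow> j \<le> N \<longrightarrow> a \<in> {1..N} \<longrightarrow> b \<in> {1..N} \<longrightarrow> Xv j a \<in> A \<longrightarrow> Xv j b \<notin> A
       \<longrightarrow> (\<exists>r c. r \<in> A \<and> c \<notin> A \<and> {r,c} \<in> snd ?G \<and> r \<in> LV N j \<and> c \<in> LV N j)"
  proof (intro allI impI)
    fix A j a b
    assume h: "1 \<le> j" "j \<le> N" "a \<in> {1..N}" "b \<in> {1..N}" "Xv j a \<in> A" "Xv j b \<notin> A"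
    have ab: "a \<noteq> b" using h by auto
    have LVj: "Xv p x \<in> LV N j" if "p = j \<or> p + 1 = j" "1 \<le> p" "x \<in> {1..N}" for p x
      using that unfolding LV_def by blast
    show "\<exists>r c. r \<in> A \<and> c \<notin> A \<and> {r,c} \<in> snd ?G \<and> r \<in> LV N j \<and> c \<in> LV N j"
    proof (cases "odd j")
      case True
      have "{Xv j a, Xv j b} \<in> snd ?G" using clq[OF True h(1) h(2) h(3) h(4) ab] .
      then show ?thesis using h LVj by blast
    next
      case False
      then have j2: "2 \<le> j" using h(1) by presburger
      define p where "p = j - 1"
      have p: "p + 1 = j" "1 \<le> p" "odd p" "p \<le> N" using j2 False h(2) unfolding p_def by auto
      show ?thesis
      proof (cases "Xv p a \<in> A")
        case False
        have "{Xv (p+1) a, Xv p a} \<in> snd ?G" using mat(2)[of p a] p h by simp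
        then have "{Xv j a, Xv p a} \<in> snd ?G" using p by simp
        then show ?thesis using h False LVj p by blast
      next
        case pa: True
        show ?thesis
        proof (cases "Xv p b \<in> A")
          case True
          have "{Xv p b, Xv (p+1) b} \<in> snd ?G" using mat(1)[of p b] p h by simp
          then have "{Xv p b, Xv j b} \<in> snd ?G" using p by simp
          then show ?thesis using h True LVj p by blast
        next
          case False
          have "{Xv p a, Xv p b} \<in> snd ?G" using clq[OF p(3) p(2) p(4) h(3) h(4) ab] .
          then show ?thesis using pa False LVj p h by blast
        qed
      qed
    qed
  qed
  have cross: "{Xv t a, Xv (t+1) b} \<in> snd ?G \<longleftrightarrow> a = b" "{Xv (t+1) a, Xv t b} \<in> snd ?G \<longleftrightarrow> a = b"
    if "1 \<le> t" "t + 1 \<le> N" "a \<in> {1..N}" "b \<in> {1..N}" for t a b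
    using that unfolding E_MKI by auto
  have H3: "\<forall>A t S. 1 \<le> t \<longrightarrow> t+1 \<le> N \<longrightarrow> S \<subseteq> {1..N} \<longrightarrow> n+1 \<le> card S \<longrightarrow> A \<subseteq> fst ?G \<longrightarrow>
        (\<forall>a\<in>S. Xv t a \<in> A \<and> Xv (t+1) a \<notin> A) \<longrightarrow> n \<le> cutrank ?G A"
  proof (intro allI impI)
    fix A t S assume h: "1 \<le> t" "t+1 \<le> N" "S \<subseteq> {1..N}" "n+1 \<le> card S" "A \<subseteq> fst ?G"
      "\<forall>a\<in>S. Xv t a \<in> A \<and> Xv (t+1) a \<notin> A"
    have adj: "\<forall>a\<in>S. \<forall>b\<in>S. ({Xv t a, Xv (t+1) b} \<in> snd ?G \<longleftrightarrow> a = b)" using cross(1) h by blast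
    have "card S \<le> cutrank ?G A"
      by (rule H3_gen[OF _ sub1 h(5) h(3) _ _ adj pat_eq h(6)]) (use VH h in auto)
    then show "n \<le> cutrank ?G A" using h by simp
  qed
  have H3': "\<forall>A t S. 1 \<le> t \<longrightarrow> t+1 \<le> N \<longrightarrow> S \<subseteq> {1..N} \<longrightarrow> n+1 \<le> card S \<longrightarrow> A \<subseteq> fst ?G \<longrightarrow>
        (\<forall>a\<in>S. Xv (t+1) a \<in> A \<and> Xv t a \<notin> A) \<longrightarrow> n \<le> cutrank ?G A"
  proof (intro allI impI)
    fix A t S assume h: "1 \<le> t" "t+1 \<le> N" "S \<subseteq> {1..N}" "n+1 \<le> card S" "A \<subseteq> fst ?G"
      "\<forall>a\<in>S. Xv (t+1) a \<in> A \<and> Xv t a \<notin> A"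
    have adj: "\<forall>a\<in>S. \<forall>b\<in>S. ({Xv (t+1) a, Xv t b} \<in> snd ?G \<longleftrightarrow> a = b)" using cross(2) h by blast
    have "card S \<le> cutrank ?G A"
      by (rule H3_gen[OF _ sub1 h(5) h(3) _ _ adj pat_eq h(6)]) (use VH h in auto)
    then show "n \<le> cutrank ?G A" using h by simp
  qed
  show ?thesis
    by (rule generic_rw[OF _ sub1 _ H1 H2 H3 H3' num]) (use VH in auto)
qed


theorem lemma8p7:
  shows "\<exists>f :: nat \<Rightarrow> nat. \<forall>n \<ge> 1.
     rankwidth (Q_MKI (f n) (f n)) \<ge> n \<and> rankwidth (Q_MKK (f n) (f n)) \<ge> n \<and>
     rankwidth (Q_AKK (f n) (f n)) \<ge> n \<and> rankwidth (Q_HKK (f n) (f n)) \<ge> n"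
proof -
  define g :: "nat \<Rightarrow> nat" where "g n = 100*(n+1)*(n+1)" for n
  have "\<forall>n \<ge> 1. rankwidth (Q_MKI (g n) (g n)) \<ge> n \<and> rankwidth (Q_MKK (g n) (g n)) \<ge> n \<and>
     rankwidth (Q_AKK (g n) (g n)) \<ge> n \<and> rankwidth (Q_HKK (g n) (g n)) \<ge> n"
  proof (intro allI impI)
    fix n :: nat assume "n \<ge> 1"
    have NE: "g n = 100*(n*n) + 200*n + 100" unfolding g_def by (simp add: algebra_simps)
    have num: "25 \<le> g n" "3*n \<le> g n" "48*n*n < g n" "n + 1 \<le> g n"
      using NE by (simp_all add: algebra_simps)
    show "rankwidth (Q_MKI (g n) (g n)) \<ge> n \<and> rankwidth (Q_MKK (g n) (g n)) \<ge> n \<and>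
     rankwidth (Q_AKK (g n) (g n)) \<ge> n \<and> rankwidth (Q_HKK (g n) (g n)) \<ge> n"
      using MKI_rw[OF num] MKK_rw[OF num] AKK_rw[OF num] HKK_rw[OF num] by simp
  qed
  then show ?thesis by blast
qed

end
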